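(* For every $\alpha,c,\beta\ge1$ and $\varepsilon>0$ there is no deterministic $\beta$-approximation algorithm for the Weighted Monotone Subset Minimization problem in the $(\alpha,c)$-extension model which runs in time $n^{O(1)}\cdot\left(\mathrm{amls}(\alpha,c,\beta)-\varepsilon\right)^{n}$, where $n=|U|$.
   Context: A set system $\mathcal{F}\subseteq 2^U$ over a finite set $U$ is monotone if $U\in\mathcal{F}$ and whenever $T\subseteq S\subseteq U$ and $T\in\mathcal{F}$ then $S\in\mathcal{F}$. An instance of the Weighted Monotone Subset Minimization problem (WSM) is a triple $(U,w,\mathcal{F})$ with $U$ finite, $w:U\to\mathbb{N}$ and $\mathcal{F}$ a monotone set system of $U$; the goal is to find $S\in\mathcal{F}$ minimizing $w(S)=\sum_{e\in S}w(e)$; $\mathrm{opt}(U,w,\mathcal{F})=\min\{w(S)\mid S\in\mathcal{F}\}$. An $\alpha$-extension oracle for $(U,w,\mathcal{F})$ is a function $\mathcal{O}:2^U\times\mathbb{N}_{\ge0}\to2^U$ such that for all $S\subseteq U$, $\ell\in\mathbb{N}_{\ge0}$: (1) $\mathcal{O}(S,\ell)\cup S\in\mathcal{F}$; (2) $w(\mathcal{O}(S,\ell))\le\alpha\cdot\min\{w(X)\mid X\subseteq U,|X|\le\ell,X\cup S\in\mathcal{F}\}$ (with $\min\emptyset=\infty$). In the $(\alpha,c)$-extension model the algorithm receives $U$ and $w$ and has oracle access to some $\alpha$-extension oracle $\mathcal{O}$ of $(U,w,\mathcal{F})$ for some monotone $\mathcal{F}$. It is a $\beta$-approximation if for every instance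 and every $\alpha$-extension oracle it returns $T\in\mathcal{F}$ with $w(T)\le\beta\cdot\mathrm{opt}(U,w,\mathcal{F})$. Its running time is the number of computation steps plus $c^{\ell}$ for every query $(S,\ell)$ issued; it runs in time $f(n)$ if this is at most $f(|U|)$ for every instance and oracle. Definition of amls: let $\mathcal{H}(x)=-x\ln x-(1-x)\ln(1-x)$ with $0\ln0=0$, $\mathcal{H}(0)=\mathcal{H}(1)=0$. For $\alpha,\beta,c\ge1$ define $\delta_{\alpha,\beta}(\kappa,\tau)=\frac{\frac{\beta}{\alpha}\kappa-\frac{\tau}{\alpha}}{1-\tau}$ if $\tau\ne1$ and $=\frac1\alpha$ if $\tau=1$; $\gamma_{\alpha,\beta}(\kappa,\tau)=(1-\frac\beta\alpha)\frac\kappa\tau+\frac1\alpha$ if $\tau\ne0$ and $=\frac1\alpha$ if $\tau=0$; $g_{\alpha,\beta,c}(\kappa,\tau)=\frac{\beta\kappa-\tau}{\alpha}\ln c-\tau\mathcal{H}(\gamma_{\alpha,\beta}(\kappa,\tau))-(1-\tau)\mathcal{H}(\delta_{\alpha,\beta}(\kappa,\tau))+\mathcal{H}(\kappa)$; $M_{\alpha,\beta}(\kappa)=\frac{\beta-\alpha}{1-\alpha\kappa}\kappa$ if $\alpha<\beta$, $0$ if $\alpha=\beta$, $\frac{\alpha-\beta}{\alpha-1}\kappa$ if $\alpha>\beta$. Then $\mathrm{amls}(\alpha,c,\beta)=\exp\left(\max_{0\le\kappa\le1/\beta}\ \min_{M_{\alpha,\beta}(\kappa)\le\tau\le\beta\kappa}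 g_{\alpha,\beta,c}(\kappa,\tau)\right)$. *)

theory Defs
  imports Complex_Main
begin

definition monotone_sys :: "nat set \<Rightarrow> nat set set \<Rightarrow> bool" where
  "monotone_sys U F \<longleftrightarrow> F \<subseteq> Pow U \<and> U \<in> F \<and>
     (\<forall>T S. T \<subseteq> S \<and> S \<subseteq> U \<and> T \<in> F \<longrightarrow> S \<in> F)"

definition wt :: "(nat \<Rightarrow> nat) \<Rightarrow> nat set \<Rightarrow> real" where
  "wt w S = real (\<Sum>e\<in>S. w e)"

definition opt :: "nat set \<Rightarrow> (nat \<Rightarrow> nat) \<Rightarrow> nat set set \<Rightarrow> real" where
  "opt U w F = Min (wt w ` F)"

text \<open>The minimum (with min of the empty set = infinity) is rendered literally:
  the answer weight is at most alpha times the weight of every admissible X.\<close>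
definition ext_oracle ::
  "real \<Rightarrow> nat set \<Rightarrow> (nat \<Rightarrow> nat) \<Rightarrow> nat set set \<Rightarrow> (nat set \<Rightarrow> nat \<Rightarrow> nat set) \<Rightarrow> bool" where
  "ext_oracle \<alpha> U w F orc \<longleftrightarrow>
     (\<forall>S l. S \<subseteq> U \<longrightarrow>
        orc S l \<subseteq> U \<and> orc S l \<union> S \<in> F \<and>
        (\<forall>X. X \<subseteq> U \<and> card X \<le> l \<and> X \<union> S \<in> F \<longrightarrow> wt w (orc S l) \<le> \<alpha> * wt w X))"

text \<open>A deterministic oracle algorithm, once U and w are given, is an (adaptive)
  decision tree: it either outputs a set, or issues a query (S,l) and continues
  depending on the oracle answer.\<close>
datatype alg = Output "nat set" | Query "nat set" nat "nat set \<Rightarrow> alg"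

primrec run_out :: "alg \<Rightarrow> (nat set \<Rightarrow> nat \<Rightarrow> nat set) \<Rightarrow> nat set" where
  "run_out (Output T) orc = T"
| "run_out (Query S l k) orc = run_out (k (orc S l)) orc"

text \<open>Running time: each query (S,l) costs c^l plus one computation step
  (a lower bound on the number of computation steps of any real algorithm).\<close>
primrec run_time :: "real \<Rightarrow> alg \<Rightarrow> (nat set \<Rightarrow> nat \<Rightarrow> nat set) \<Rightarrow> real" where
  "run_time c (Output T) orc = 0"
| "run_time c (Query S l k) orc = 1 + c ^ l + run_time c (k (orc S l)) orc"

definition is_approx ::
  "real \<Rightarrow> real \<Rightarrow> (nat set \<Rightarrow> (nat \<Rightarrow> nat) \<Rightarrow> alg) \<Rightarrow> bool" where
  "is_approx \<alpha> \<beta> A \<longleftrightarrow>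
     (\<forall>U w F orc. finite U \<and> monotone_sys U F \<and> ext_oracle \<alpha> U w F orc \<longrightarrow>
        run_out (A U w) orc \<in> F \<and> wt w (run_out (A U w) orc) \<le> \<beta> * opt U w F)"

definition runs_in_time_poly_exp ::
  "real \<Rightarrow> real \<Rightarrow> (nat set \<Rightarrow> (nat \<Rightarrow> nat) \<Rightarrow> alg) \<Rightarrow> real \<Rightarrow> bool" where
  "runs_in_time_poly_exp \<alpha> c A b \<longleftrightarrow>
     (\<exists>C::real. \<exists>d::nat. \<exists>N::nat. \<forall>U w F orc.
        finite U \<and> monotone_sys U F \<and> ext_oracle \<alpha> U w F orc \<and> card U \<ge> N \<longrightarrow>
        run_time c (A U w) orc \<le> C * real (card U) ^ d * b ^ card U)"

definition Hent :: "real \<Rightarrow> real" where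
  "Hent x = (if x = 0 \<or> x = 1 then 0 else - x * ln x - (1 - x) * ln (1 - x))"

definition delta_ab :: "real \<Rightarrow> real \<Rightarrow> real \<Rightarrow> real \<Rightarrow> real" where
  "delta_ab \<alpha> \<beta> \<kappa> \<tau> = (if \<tau> \<noteq> 1 then ((\<beta>/\<alpha>) * \<kappa> - \<tau>/\<alpha>) / (1 - \<tau>) else 1/\<alpha>)"

definition gamma_ab :: "real \<Rightarrow> real \<Rightarrow> real \<Rightarrow> real \<Rightarrow> real" where
  "gamma_ab \<alpha> \<beta> \<kappa> \<tau> = (if \<tau> \<noteq> 0 then (1 - \<beta>/\<alpha>) * (\<kappa>/\<tau>) + 1/\<alpha> else 1/\<alpha>)"

definition g_abc :: "real \<Rightarrow> real \<Rightarrow> real \<Rightarrow> real \<Rightarrow> real \<Rightarrow> real" where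
  "g_abc \<alpha> \<beta> c \<kappa> \<tau> = (\<beta> * \<kappa> - \<tau>) / \<alpha> * ln c - \<tau> * Hent (gamma_ab \<alpha> \<beta> \<kappa> \<tau>)
     - (1 - \<tau>) * Hent (delta_ab \<alpha> \<beta> \<kappa> \<tau>) + Hent \<kappa>"

definition M_ab :: "real \<Rightarrow> real \<Rightarrow> real \<Rightarrow> real" where
  "M_ab \<alpha> \<beta> \<kappa> = (if \<alpha> < \<beta> then (\<beta> - \<alpha>) / (1 - \<alpha> * \<kappa>) * \<kappa>
                    else if \<alpha> = \<beta> then 0 else (\<alpha> - \<beta>) / (\<alpha> - 1) * \<kappa>)"

text \<open>max/min rendered as Sup/Inf over the (compact) parameter ranges.\<close>
definition amls :: "real \<Rightarrow> real \<Rightarrow> real \<Rightarrow> real" where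
  "amls \<alpha> c \<beta> = exp (SUP \<kappa>\<in>{0..1/\<beta>}. INF \<tau>\<in>{M_ab \<alpha> \<beta> \<kappa>..\<beta> * \<kappa>}. g_abc \<alpha> \<beta> c \<kappa> \<tau>)"

end

theory Submission
  imports Defs "HOL-Real_Asymp.Real_Asymp"
begin


definition fx :: "real \<Rightarrow> real" where "fx t = t * ln t"
definition Aent :: "real \<Rightarrow> real \<Rightarrow> real" where "Aent m r = fx m - fx r - fx (m - r)"

lemma fx_0[simp]: "fx 0 = 0" and fx_1[simp]: "fx 1 = 0" by (auto simp: fx_def)

lemma fx_mult: assumes "t > 0" "m \<ge> 0" shows "fx (t*m) = t * fx m + t * m * ln t"
proof (cases "m = 0")
  case True then show ?thesis by simp
next
  case False then have "m > 0" using assms by simp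
  then show ?thesis using assms by (simp add: fx_def ln_mult algebra_simps)
qed

lemma Aent_hom: assumes "t \<ge> 0" "0 \<le> r" "r \<le> m" shows "Aent (t*m) (t*r) = t * Aent m r"
proof (cases "t = 0")
  case True then show ?thesis by (simp add: Aent_def)
next
  case False then have t: "t > 0" using assms by simp
  have e: "t*m - t*r = t*(m-r)" by (simp add: algebra_simps)
  have "Aent (t*m) (t*r) = fx (t*m) - fx (t*r) - fx (t*(m-r))" unfolding Aent_def e ..
  also have "\<dots> = (t * fx m + t * m * ln t) - (t * fx r + t * r * ln t) - (t * fx (m-r) + t * (m-r) * ln t)"
    using t assms by (simp add: fx_mult)
  also have "\<dots> = t * Aent m r" by (simp add: Aent_def algebra_simps)
  finally show ?thesis .
qed

lemma Aent_nonneg: assumes "0 \<le> r" "r \<le> m" shows "0 \<le> Aent m r"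
proof -
  have a: "r * ln r \<le> r * ln m"
    using assms by (cases "r = 0") (auto intro!: mult_left_mono)
  have b: "(m-r) * ln (m-r) \<le> (m-r) * ln m"
    using assms by (cases "m - r = 0") (auto intro!: mult_left_mono)
  have "fx m = r * ln m + (m-r) * ln m" by (simp add: fx_def algebra_simps)
  then show ?thesis using a b by (simp add: Aent_def fx_def)
qed

lemma gibbs: fixes b q :: real assumes "b \<ge> 0" "q \<ge> 0" "b > 0 \<Longrightarrow> q > 0" shows "b * ln b - b * ln q \<ge> b - q"
proof (cases "b = 0")
  case True then show ?thesis using assms by auto
next
  case False then have b: "b > 0" "q > 0" using assms by auto
  have "ln (q/b) \<le> q/b - 1" using b by (intro ln_le_minus_one) auto
  then have "b * ln (q/b) \<le> b * (q/b - 1)" using b by (intro mult_left_mono) auto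
  then show ?thesis using b by (simp add: ln_div algebra_simps)
qed

lemma Aent_superadd:
  assumes "0 \<le> r1" "r1 \<le> m1" "0 \<le> r2" "r2 \<le> m2"
  shows "Aent m1 r1 + Aent m2 r2 \<le> Aent (m1+m2) (r1+r2)"
proof (cases "m1 + m2 = 0")
  case True then have "m1 = 0" "m2 = 0" "r1 = 0" "r2 = 0" using assms by auto
  then show ?thesis by (simp add: Aent_def)
next
  case False
  define MM where "MM = m1 + m2"
  define RR where "RR = r1 + r2"
  define CC where "CC = (m1 - r1) + (m2 - r2)"
  have MM: "MM > 0" using False assms unfolding MM_def by auto
  have CCe: "CC = MM - RR" unfolding CC_def MM_def RR_def by simp
  have key: "x * ln x - x * (ln a + ln Y - ln MM) \<ge> x - a * Y / MM"
    if "0 \<le> x" "x \<le> a" "x \<le> Y" for x a Y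
  proof (cases "x = 0")
    case True then show ?thesis using that MM by simp
  next
    case False then have pos: "x > 0" "a > 0" "Y > 0" using that by auto
    have "ln (a * Y / MM) = ln a + ln Y - ln MM" using pos MM by (simp add: ln_mult ln_div)
    moreover have "x * ln x - x * ln (a*Y/MM) \<ge> x - a * Y / MM"
      using pos MM by (intro gibbs) auto
    ultimately show ?thesis by simp
  qed
  have k1: "r1 * ln r1 - r1 * (ln m1 + ln RR - ln MM) \<ge> r1 - m1 * RR / MM"
    using assms by (intro key) (auto simp: RR_def)
  have k2: "r2 * ln r2 - r2 * (ln m2 + ln RR - ln MM) \<ge> r2 - m2 * RR / MM"
    using assms by (intro key) (auto simp: RR_def)
  have k3: "(m1-r1) * ln (m1-r1) - (m1-r1) * (ln m1 + ln CC - ln MM) \<ge> (m1-r1) - m1 * CC / MM"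
    using assms by (intro key) (auto simp: CC_def)
  have k4: "(m2-r2) * ln (m2-r2) - (m2-r2) * (ln m2 + ln CC - ln MM) \<ge> (m2-r2) - m2 * CC / MM"
    using assms by (intro key) (auto simp: CC_def)
  have s1: "m1 * RR / MM + m2 * RR / MM = RR"
    using MM unfolding add_divide_distrib[symmetric] distrib_right[symmetric] MM_def by simp
  have s2: "m1 * CC / MM + m2 * CC / MM = CC"
    using MM unfolding add_divide_distrib[symmetric] distrib_right[symmetric] MM_def by simp
  have "Aent (m1+m2) (r1+r2) - Aent m1 r1 - Aent m2 r2 =
     (r1 * ln r1 - r1 * (ln m1 + ln RR - ln MM)) + (r2 * ln r2 - r2 * (ln m2 + ln RR - ln MM))
   + ((m1-r1) * ln (m1-r1) - (m1-r1) * (ln m1 + ln CC - ln MM))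
   + ((m2-r2) * ln (m2-r2) - (m2-r2) * (ln m2 + ln CC - ln MM))"
    unfolding Aent_def fx_def CCe[symmetric] MM_def[symmetric] RR_def[symmetric]
    using CCe unfolding MM_def RR_def CC_def by (simp add: algebra_simps)
  also have "\<dots> \<ge> (r1 - m1 * RR / MM) + (r2 - m2 * RR / MM) + ((m1-r1) - m1 * CC / MM) + ((m2-r2) - m2 * CC / MM)"
    using k1 k2 k3 k4 by linarith
  finally show ?thesis using s1 s2 unfolding RR_def CC_def by linarith
qed

lemma Aent_concave:
  assumes "0 \<le> r1" "r1 \<le> m1" "0 \<le> r2" "r2 \<le> m2" "0 \<le> t" "t \<le> 1"
  shows "(1-t) * Aent m1 r1 + t * Aent m2 r2 \<le> Aent ((1-t)*m1 + t*m2) ((1-t)*r1 + t*r2)"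
proof -
  have "(1-t) * Aent m1 r1 = Aent ((1-t)*m1) ((1-t)*r1)" using assms by (simp add: Aent_hom)
  moreover have "t * Aent m2 r2 = Aent (t*m2) (t*r2)" using assms by (simp add: Aent_hom)
  ultimately show ?thesis using assms
    by (metis Aent_superadd mult_left_mono mult_nonneg_nonneg diff_ge_0_iff_ge)
qed



lemma Hent_Aent: "Hent x = Aent 1 x"
  by (simp add: Hent_def Aent_def fx_def)

lemma Aent_Hent: assumes "t > 0" "0 \<le> r" "r \<le> t" shows "Aent t r = t * Hent (r / t)"
proof -
  have "Aent (t*1) (t*(r/t)) = t * Aent 1 (r/t)" using assms by (intro Aent_hom) auto
  then show ?thesis using assms by (simp add: Hent_Aent)
qed

lemma Aent_00[simp]: "Aent 0 0 = 0" by (simp add: Aent_def)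

lemma g_line:
  assumes a: "\<alpha> \<ge> 1" and i: "\<iota> = (\<beta>*\<kappa> - \<tau>)/\<alpha>"
    and d: "0 \<le> \<kappa> - \<iota>" "\<kappa> - \<iota> \<le> \<tau>" "0 \<le> \<iota>" "\<iota> \<le> 1 - \<tau>"
  shows "g_abc \<alpha> \<beta> c \<kappa> \<tau> = Aent 1 \<kappa> - (Aent \<tau> (\<kappa>-\<iota>) + Aent (1-\<tau>) \<iota> - ln c * \<iota>)"
proof -
  have t1: "\<tau> * Hent (gamma_ab \<alpha> \<beta> \<kappa> \<tau>) = Aent \<tau> (\<kappa>-\<iota>)"
  proof (cases "\<tau> = 0")
    case True then have "\<kappa> - \<iota> = 0" using d by simp
    then show ?thesis using True by simp
  next
    case False
    then have tp: "\<tau> > 0" using d by simp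
    have "gamma_ab \<alpha> \<beta> \<kappa> \<tau> = (\<kappa>-\<iota>)/\<tau>"
      using False a unfolding gamma_ab_def i by (simp add: field_simps)
    then show ?thesis using Aent_Hent[of \<tau> "\<kappa>-\<iota>"] tp d by simp
  qed
  have t2: "(1-\<tau>) * Hent (delta_ab \<alpha> \<beta> \<kappa> \<tau>) = Aent (1-\<tau>) \<iota>"
  proof (cases "\<tau> = 1")
    case True then have "\<iota> = 0" using d by simp
    then show ?thesis using True by simp
  next
    case False
    then have tp: "1 - \<tau> > 0" using d by simp
    have "delta_ab \<alpha> \<beta> \<kappa> \<tau> = \<iota>/(1-\<tau>)"
      using False a unfolding delta_ab_def i by (simp add: field_simps)
    then show ?thesis using Aent_Hent[of "1-\<tau>" "\<iota>"] tp d by simp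
  qed
  have t3: "(\<beta> * \<kappa> - \<tau>) / \<alpha> * ln c = ln c * \<iota>" using i by simp
  show ?thesis unfolding g_abc_def t3 using t1 t2 by (simp add: Hent_Aent)
qed

lemma line_dom:
  assumes a: "\<alpha> \<ge> 1" and b: "\<beta> \<ge> 1" and k: "0 \<le> \<kappa>" "\<beta> * \<kappa> \<le> 1"
    and t: "M_ab \<alpha> \<beta> \<kappa> \<le> \<tau>" "\<tau> \<le> \<beta> * \<kappa>" and i: "\<iota> = (\<beta>*\<kappa> - \<tau>)/\<alpha>"
  shows "0 \<le> \<tau>" "0 \<le> \<kappa> - \<iota>" "\<kappa> - \<iota> \<le> \<tau>" "0 \<le> \<iota>" "\<iota> \<le> 1 - \<tau>"
proof -
  have ap: "\<alpha> > 0" using a by simp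
  have M0: "0 \<le> M_ab \<alpha> \<beta> \<kappa>"
  proof -
    consider "\<alpha> < \<beta>" | "\<alpha> = \<beta>" | "\<alpha> > \<beta>" by linarith
    then show ?thesis
    proof cases
      case 1
      have "\<alpha> * \<kappa> \<le> \<beta> * \<kappa>" using 1 k by (intro mult_right_mono) auto
      have "\<alpha> * \<kappa> < 1 \<or> \<kappa> = 0"
        using 1 k by (metis mult_strict_right_mono le_less not_less order_less_le_trans)
      then show ?thesis using 1 k unfolding M_ab_def by auto
    next
      case 2 then show ?thesis unfolding M_ab_def by simp
    next
      case 3 then show ?thesis using k b unfolding M_ab_def by auto
    qed
  qed
  show "0 \<le> \<tau>" using M0 t by linarith
  show "0 \<le> \<iota>" using t ap i by simp
  have "\<beta> * \<kappa> - \<tau> \<le> \<alpha> * (1 - \<tau>)"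
  proof -
    have "(\<alpha> - 1) * \<tau> \<le> (\<alpha> - 1) * 1" using a t k by (intro mult_left_mono) auto
    then show ?thesis using k by (simp add: algebra_simps)
  qed
  moreover have "\<alpha> * \<iota> = \<beta> * \<kappa> - \<tau>" using ap i by simp
  ultimately have "\<alpha> * (\<iota> + \<tau>) \<le> \<alpha> * 1" by (simp add: algebra_simps)
  then show "\<iota> \<le> 1 - \<tau>" using ap by (simp add: mult_le_cancel_left_pos)
  have "\<beta> * \<kappa> - \<tau> \<le> \<alpha> * \<kappa>"
  proof (cases "\<alpha> < \<beta>")
    case True
    have ak: "\<alpha> * \<kappa> \<le> \<beta> * \<kappa>" using True k by (intro mult_right_mono) auto
    show ?thesis
    proof (cases "\<kappa> = 0")
      case True then show ?thesis using t M0 by simp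
    next
      case False
      then have kp: "\<kappa> > 0" using k by simp
      have ak1: "\<alpha> * \<kappa> < 1" using True kp k(2) by (metis mult_strict_right_mono order_less_le_trans)
      have "M_ab \<alpha> \<beta> \<kappa> = (\<beta> - \<alpha>) * \<kappa> / (1 - \<alpha> * \<kappa>)" using True unfolding M_ab_def by simp
      also have "\<dots> \<ge> (\<beta> - \<alpha>) * \<kappa>"
      proof -
        have x0: "0 \<le> (\<beta> - \<alpha>) * \<kappa>" using True kp by simp
        have "(\<beta> - \<alpha>) * \<kappa> * (1 - \<alpha> * \<kappa>) \<le> (\<beta> - \<alpha>) * \<kappa> * 1"
          using x0 kp ap by (intro mult_left_mono) auto
        then show ?thesis using ak1 by (simp add: le_divide_eq)
      qed
      finally show ?thesis using t by (simp add: algebra_simps)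
    qed
  next
    case False
    then have "\<beta> * \<kappa> \<le> \<alpha> * \<kappa>" using k by (intro mult_right_mono) auto
    then show ?thesis using M0 t by linarith
  qed
  moreover have ai: "\<alpha> * \<iota> = \<beta> * \<kappa> - \<tau>" using ap i by simp
  ultimately have "\<alpha> * \<iota> \<le> \<alpha> * \<kappa>" by simp
  then show "0 \<le> \<kappa> - \<iota>" using ap by (simp add: mult_le_cancel_left_pos)
  have "(\<alpha> - \<beta>) * \<kappa> \<le> (\<alpha> - 1) * \<tau>"
  proof (cases "\<alpha> > \<beta>")
    case True
    then have "M_ab \<alpha> \<beta> \<kappa> = (\<alpha> - \<beta>) / (\<alpha> - 1) * \<kappa>" unfolding M_ab_def by simp
    then have "(\<alpha> - \<beta>) / (\<alpha> - 1) * \<kappa> \<le> \<tau>" using t by simp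
    moreover have "\<alpha> - 1 > 0" using True b by simp
    ultimately show ?thesis by (simp add: field_simps)
  next
    case False
    then have "(\<alpha> - \<beta>) * \<kappa> \<le> 0" using k by (simp add: mult_nonpos_nonneg)
    moreover have "0 \<le> (\<alpha> - 1) * \<tau>" using a M0 t by simp
    ultimately show ?thesis by linarith
  qed
  then have "\<alpha> * (\<kappa> - \<iota>) \<le> \<alpha> * \<tau>" using ai by (simp add: algebra_simps)
  then show "\<kappa> - \<iota> \<le> \<tau>" using ap by (simp add: mult_le_cancel_left_pos)
qed



lemma Aent_n0[simp]: "Aent m 0 = 0" by (simp add: Aent_def)
lemma Aent_nn[simp]: "Aent m m = 0" by (simp add: Aent_def)

lemma pow_exp_ln: assumes "p > 0" shows "p ^ r = exp (real r * ln p)"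
  using assms by (simp add: exp_of_nat_mult)

lemma binom_term_eq:
  fixes m r :: nat
  assumes "0 < r" "r < m"
  defines "p \<equiv> real r / real m"
  shows "p ^ r * (1 - p) ^ (m - r) = exp (- Aent (real m) (real r))"
proof -
  have mp: "real m > 0" using assms by simp
  have p0: "p > 0" "1 - p > 0" using assms unfolding p_def by (auto simp: field_simps)
  have q: "1 - p = real (m - r) / real m" using assms unfolding p_def by (simp add: field_simps of_nat_diff)
  have "p ^ r * (1 - p) ^ (m - r) = exp (real r * ln p + real (m - r) * ln (1 - p))"
    using p0 by (simp add: pow_exp_ln exp_add)
  also have "real r * ln p + real (m - r) * ln (1 - p) = - Aent (real m) (real r)"
  proof -
    have "ln p = ln (real r) - ln (real m)" unfolding p_def using assms by (simp add: ln_div)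
    moreover have "ln (1 - p) = ln (real (m - r)) - ln (real m)" unfolding q using assms by (simp add: ln_div)
    moreover have "real (m - r) = real m - real r" using assms by (simp add: of_nat_diff)
    ultimately have "real r * ln p + real (m - r) * ln (1 - p) =
       real r * (ln (real r) - ln (real m)) + (real m - real r) * (ln (real m - real r) - ln (real m))"
      by simp
    then show ?thesis unfolding Aent_def fx_def by (simp add: algebra_simps)
  qed
  finally show ?thesis .
qed

lemma binom_upper: fixes m r :: nat assumes "r \<le> m"
  shows "real (m choose r) \<le> exp (Aent (real m) (real r))"
proof -
  consider "r = 0" | "r = m" | "0 < r \<and> r < m" using assms by linarith
  then show ?thesis
  proof cases
    case 1 then show ?thesis by simp
  next
    case 2 then show ?thesis by simp
  next
    case 3
    define p where "p = real r / real m"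
    have "(p + (1 - p)) ^ m = (\<Sum>i\<le>m. real (m choose i) * p ^ i * (1-p) ^ (m - i))"
      by (rule binomial_ring)
    then have s: "(\<Sum>i\<le>m. real (m choose i) * p ^ i * (1-p) ^ (m - i)) = 1" by simp
    have p0: "p \<ge> 0" "1 - p \<ge> 0" using 3 unfolding p_def by (auto simp: field_simps)
    have "real (m choose r) * p ^ r * (1-p) ^ (m - r) \<le> (\<Sum>i\<le>m. real (m choose i) * p ^ i * (1-p) ^ (m - i))"
      using 3 p0 by (intro member_le_sum) auto
    then have "real (m choose r) * exp (- Aent (real m) (real r)) \<le> 1"
      using s binom_term_eq[of r m] 3 unfolding p_def by (simp add: mult.assoc)
    then show ?thesis by (simp add: exp_minus field_simps)
  qed
qed

lemma binom_lower: fixes n k :: nat assumes "k \<le> n"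
  shows "exp (Aent (real n) (real k)) \<le> real (n + 1) * real (n choose k)"
proof -
  consider "k = 0" | "k = n" | "0 < k \<and> k < n" using assms by linarith
  then show ?thesis
  proof cases
    case 1 then show ?thesis by simp
  next
    case 2 then show ?thesis by simp
  next
    case 3
    define p where "p = real k / real n"
    define t where "t i = real (n choose i) * p ^ i * (1-p) ^ (n - i)" for i
    have p0: "p > 0" "1 - p > 0" using 3 unfolding p_def by (auto simp: field_simps)
    have ratio: "t (Suc i) * (real i + 1) * (1 - p) = t i * (real n - real i) * p" if "i < n" for i
    proof -
      have c: "real (n choose Suc i) * (real i + 1) = real (n choose i) * (real n - real i)"
      proof -
        have "Suc i * (n choose Suc i) = n * ((n - 1) choose i)" by (rule binomial_absorption)
        moreover have "(n - i) * (n choose i) = n * ((n - 1) choose i)" by (rule binomial_absorb_comp)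
        ultimately have "Suc i * (n choose Suc i) = (n - i) * (n choose i)" by simp
        then have "real (Suc i * (n choose Suc i)) = real ((n - i) * (n choose i))" by simp
        then show ?thesis using that by (simp add: of_nat_diff algebra_simps)
      qed
      have e: "(1-p) ^ (n - i) = (1-p) ^ (n - Suc i) * (1 - p)"
      proof -
        have "n - i = Suc (n - Suc i)" using that by simp
        then show ?thesis by (simp add: mult.commute)
      qed
      have "t (Suc i) * (real i + 1) * (1 - p)
          = (real (n choose Suc i) * (real i + 1)) * (p ^ i * p) * ((1-p) ^ (n - Suc i) * (1 - p))"
        unfolding t_def by (simp add: mult.commute mult.left_commute mult.assoc)
      also have "\<dots> = (real (n choose i) * (real n - real i)) * (p ^ i * p) * ((1-p) ^ (n - i))"
        unfolding c e ..
      also have "\<dots> = t i * (real n - real i) * p"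
        unfolding t_def by (simp add: mult.commute mult.left_commute mult.assoc)
      finally show ?thesis .
    qed
    have up: "t i \<le> t (Suc i)" if "i < k" for i
    proof -
      have "(real i + 1) * (1 - p) \<le> (real n - real i) * p"
      proof -
        have "(real i + 1) * (real n - real k) \<le> (real n - real i) * real k"
        proof -
          have "real (i+1) \<le> real k" using that by simp
          then have "(real i + 1) * real n \<le> real k * real n" by (intro mult_right_mono) auto
          also have "\<dots> \<le> real k * real n + real k" by simp
          finally show ?thesis by (simp add: algebra_simps)
        qed
        moreover have "real n * ((real i + 1) * (1 - p)) = (real i + 1) * (real n - real k)"
          using 3 unfolding p_def by (simp add: field_simps)
        moreover have "real n * ((real n - real i) * p) = (real n - real i) * real k"
          using 3 unfolding p_def by (simp add: field_simps)
        ultimately have "real n * ((real i + 1) * (1 - p)) \<le> real n * ((real n - real i) * p)" by metis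
        then show ?thesis using 3 by (simp add: mult_le_cancel_left_pos)
      qed
      moreover have "t i \<ge> 0" unfolding t_def using p0 by simp
      ultimately have "t i * ((real i + 1) * (1 - p)) \<le> t i * ((real n - real i) * p)"
        by (intro mult_left_mono) auto
      also have "\<dots> = t (Suc i) * ((real i + 1) * (1 - p))" using ratio[of i] that 3 by (simp add: algebra_simps)
      finally show ?thesis using p0 by (simp add: mult_le_cancel_right_pos)
    qed
    have down: "t (Suc i) \<le> t i" if "k \<le> i" "i < n" for i
    proof -
      have "(real n - real i) * p \<le> (real i + 1) * (1 - p)"
      proof -
        have "(real n - real i) * real k \<le> (real i + 1) * (real n - real k)"
        proof -
          have "real k \<le> real i" using that by simp
          then have "real k * real n \<le> real i * real n" by (intro mult_right_mono) auto
          moreover have "real k \<le> real n" using 3 by simp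
          ultimately show ?thesis by (simp add: algebra_simps)
        qed
        moreover have "real n * ((real i + 1) * (1 - p)) = (real i + 1) * (real n - real k)"
          using 3 unfolding p_def by (simp add: field_simps)
        moreover have "real n * ((real n - real i) * p) = (real n - real i) * real k"
          using 3 unfolding p_def by (simp add: field_simps)
        ultimately have "real n * ((real n - real i) * p) \<le> real n * ((real i + 1) * (1 - p))" by metis
        then show ?thesis using 3 by (simp add: mult_le_cancel_left_pos)
      qed
      moreover have "t (Suc i) \<ge> 0" unfolding t_def using p0 by simp
      ultimately have "t (Suc i) * ((real n - real i) * p) \<le> t (Suc i) * ((real i + 1) * (1 - p))"
        by (intro mult_left_mono) auto
      also have "\<dots> = t i * ((real n - real i) * p)" using ratio[of i] that by (simp add: algebra_simps)
      finally show ?thesis using p0 that by (simp add: mult_le_cancel_right_pos)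
    qed
    have le1: "t (k - d) \<le> t k" for d
    proof (induction d)
      case 0 then show ?case by simp
    next
      case (Suc d)
      show ?case
      proof (cases "d < k")
        case True
        then have "k - d = Suc (k - Suc d)" by simp
        then have "t (k - Suc d) \<le> t (k - d)" using up[of "k - Suc d"] True by simp
        then show ?thesis using Suc by simp
      next
        case False then show ?thesis using Suc by simp
      qed
    qed
    have le2: "t (k + d) \<le> t k" if "k + d \<le> n" for d
      using that
    proof (induction d)
      case 0 then show ?case by simp
    next
      case (Suc d)
      then have "t (k + Suc d) \<le> t (k + d)" using down[of "k + d"] by simp
      then show ?case using Suc by simp
    qed
    have tmax: "t i \<le> t k" if "i \<le> n" for i
    proof (cases "i \<le> k")
      case True then show ?thesis using le1[of "k - i"] by simp
    next
      case False then show ?thesis using le2[of "i - k"] that by simp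
    qed
    have "(p + (1 - p)) ^ n = (\<Sum>i\<le>n. real (n choose i) * p ^ i * (1-p) ^ (n - i))"
      by (rule binomial_ring)
    then have "1 = (\<Sum>i\<le>n. t i)" unfolding t_def by simp
    also have "\<dots> \<le> (\<Sum>i\<le>n. t k)" using tmax by (intro sum_mono) auto
    also have "\<dots> = real (n+1) * t k" by simp
    finally have "1 \<le> real (n+1) * t k" .
    moreover have "t k = real (n choose k) * exp (- Aent (real n) (real k))"
      unfolding t_def p_def using binom_term_eq[of k n] 3 by (simp add: mult.assoc)
    ultimately have "1 \<le> real (n+1) * real (n choose k) * exp (- Aent (real n) (real k))"
      by (simp add: mult.assoc)
    then show ?thesis by (simp add: exp_minus field_simps)
  qed
qed



lemma fx_le0: assumes "0 \<le> t" "t \<le> 1" shows "fx t \<le> 0"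
proof (cases "t = 0")
  case True then show ?thesis by simp
next
  case False then have "ln t \<le> 0" using assms by simp
  then show ?thesis using assms unfolding fx_def by (simp add: mult_nonneg_nonpos)
qed

lemma fx_ge: assumes "0 \<le> t" shows "fx t \<ge> t - 1"
proof (cases "t = 0")
  case True then show ?thesis by simp
next
  case False then have tp: "t > 0" using assms by simp
  have "t * ln t - t * ln 1 \<ge> t - 1" using gibbs[of t 1] tp by simp
  then show ?thesis unfolding fx_def by simp
qed

lemma fx_mod:
  assumes N: "N \<ge> 1" and t: "0 \<le> t" "t \<le> N" and t': "0 \<le> t'" "t' \<le> N" and d: "\<bar>t - t'\<bar> \<le> d"
  shows "fx t - fx t' \<le> d * (ln N + 1) + 1"
proof -
  have lnN: "ln N \<ge> 0" using N by simp
  have d0: "d \<ge> 0" using d by linarith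
  show ?thesis
  proof (cases "t \<le> 1")
    case True
    have "fx t \<le> 0" using True t by (intro fx_le0) auto
    moreover have "fx t' \<ge> -1" using fx_ge[of t'] t' by linarith
    moreover have "0 \<le> d * (ln N + 1)" using d0 lnN by simp
    ultimately show ?thesis by linarith
  next
    case False
    then have tp: "t > 1" by simp
    have "t' * ln t' - t' * ln t \<ge> t' - t" using tp t' by (intro gibbs) auto
    then have "fx t - fx t' \<le> (t - t') * (ln t + 1)" unfolding fx_def by (simp add: algebra_simps)
    also have "\<dots> \<le> \<bar>t - t'\<bar> * (ln t + 1)"
      using tp by (intro mult_right_mono) auto
    also have "\<dots> \<le> d * (ln N + 1)"
      using tp t d d0 by (intro mult_mono) auto
    finally show ?thesis by simp
  qed
qed

lemma Aent_mod:
  assumes N: "N \<ge> 1"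
    and "0 \<le> r" "r \<le> m" "m \<le> N" and "0 \<le> r'" "r' \<le> m'" "m' \<le> N"
    and "\<bar>m - m'\<bar> \<le> d" "\<bar>r - r'\<bar> \<le> d" "\<bar>(m - r) - (m' - r')\<bar> \<le> d"
  shows "Aent m r - Aent m' r' \<le> 3 * (d * (ln N + 1) + 1)"
proof -
  define D where "D = d * (ln N + 1) + 1"
  have a: "fx m - fx m' \<le> d * (ln N + 1) + 1" using assms by (intro fx_mod) auto
  have b: "fx r' - fx r \<le> d * (ln N + 1) + 1" using assms by (intro fx_mod) auto
  have c: "fx (m' - r') - fx (m - r) \<le> d * (ln N + 1) + 1" using assms by (intro fx_mod) auto
  show ?thesis using a b c unfolding Aent_def D_def[symmetric] by linarith
qed

definition Lf :: "real \<Rightarrow> real \<Rightarrow> real \<Rightarrow> real \<Rightarrow> real" where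
  "Lf \<alpha> \<beta> c \<kappa> = (INF \<tau>\<in>{M_ab \<alpha> \<beta> \<kappa>..\<beta>*\<kappa>}. g_abc \<alpha> \<beta> c \<kappa> \<tau>)"

lemma M_le: assumes a: "\<alpha> \<ge> 1" and b: "\<beta> \<ge> 1" and k: "0 \<le> \<kappa>" "\<beta> * \<kappa> \<le> 1"
  shows "M_ab \<alpha> \<beta> \<kappa> \<le> \<beta> * \<kappa>"
proof -
  consider "\<alpha> < \<beta>" | "\<alpha> = \<beta>" | "\<alpha> > \<beta>" by linarith
  then show ?thesis
  proof cases
    case 1
    show ?thesis
    proof (cases "\<kappa> = 0")
      case True then show ?thesis using 1 unfolding M_ab_def by simp
    next
      case False
      then have kp: "\<kappa> > 0" using k by simp
      have ak1: "\<alpha> * \<kappa> < 1" using 1 kp k(2) by (metis mult_strict_right_mono order_less_le_trans)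
      have "(\<beta> - \<alpha>) * \<kappa> \<le> \<beta> * \<kappa> * (1 - \<alpha> * \<kappa>)"
      proof -
        have "\<alpha> * (\<beta> * \<kappa>) \<le> \<alpha> * 1" using a k by (intro mult_left_mono) auto
        then have "\<beta> - \<alpha> \<le> \<beta> * (1 - \<alpha> * \<kappa>)" by (simp add: algebra_simps)
        then have "(\<beta> - \<alpha>) * \<kappa> \<le> \<beta> * (1 - \<alpha> * \<kappa>) * \<kappa>" using kp by (intro mult_right_mono) auto
        then show ?thesis by (simp add: ac_simps)
      qed
      then have "(\<beta> - \<alpha>) * \<kappa> / (1 - \<alpha> * \<kappa>) \<le> \<beta> * \<kappa>" using ak1 by (simp add: divide_le_eq)
      then show ?thesis using 1 unfolding M_ab_def by simp
    qed
  next
    case 2 then show ?thesis using k b unfolding M_ab_def by simp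
  next
    case 3
    have "(\<alpha> - \<beta>) \<le> \<beta> * (\<alpha> - 1)"
    proof -
      have "\<alpha> * 1 \<le> \<alpha> * \<beta>" using a b by (intro mult_left_mono) auto
      then show ?thesis by (simp add: algebra_simps)
    qed
    then have "(\<alpha> - \<beta>) / (\<alpha> - 1) \<le> \<beta>" using 3 b by (simp add: divide_le_eq)
    then have "(\<alpha> - \<beta>) / (\<alpha> - 1) * \<kappa> \<le> \<beta> * \<kappa>" using k by (intro mult_right_mono) auto
    then show ?thesis using 3 unfolding M_ab_def by simp
  qed
qed

lemma g_nonneg:
  assumes a: "\<alpha> \<ge> 1" and b: "\<beta> \<ge> 1" and c: "c \<ge> 1" and k: "0 \<le> \<kappa>" "\<beta> * \<kappa> \<le> 1"
    and t: "M_ab \<alpha> \<beta> \<kappa> \<le> \<tau>" "\<tau> \<le> \<beta> * \<kappa>"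
  shows "0 \<le> g_abc \<alpha> \<beta> c \<kappa> \<tau>"
proof -
  define \<iota> where "\<iota> = (\<beta>*\<kappa> - \<tau>)/\<alpha>"
  note dom = line_dom[OF a b k t \<iota>_def]
  have "g_abc \<alpha> \<beta> c \<kappa> \<tau> = Aent 1 \<kappa> - (Aent \<tau> (\<kappa>-\<iota>) + Aent (1-\<tau>) \<iota> - ln c * \<iota>)"
    using dom a \<iota>_def by (intro g_line) auto
  moreover have "Aent \<tau> (\<kappa>-\<iota>) + Aent (1-\<tau>) \<iota> \<le> Aent (\<tau> + (1-\<tau>)) ((\<kappa>-\<iota>) + \<iota>)"
    using dom by (intro Aent_superadd) auto
  moreover have "ln c * \<iota> \<ge> 0" using c dom by simp
  ultimately show ?thesis by simp
qed

lemma Lf_lower: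
  assumes a: "\<alpha> \<ge> 1" and b: "\<beta> \<ge> 1" and c: "c \<ge> 1" and k: "0 \<le> \<kappa>" "\<beta> * \<kappa> \<le> 1"
    and t: "M_ab \<alpha> \<beta> \<kappa> \<le> \<tau>" "\<tau> \<le> \<beta> * \<kappa>"
  shows "Lf \<alpha> \<beta> c \<kappa> \<le> g_abc \<alpha> \<beta> c \<kappa> \<tau>"
  unfolding Lf_def
proof (rule cINF_lower)
  show "bdd_below (g_abc \<alpha> \<beta> c \<kappa> ` {M_ab \<alpha> \<beta> \<kappa>..\<beta> * \<kappa>})"
    using g_nonneg[OF a b c k] by (intro bdd_belowI[where m = 0]) auto
  show "\<tau> \<in> {M_ab \<alpha> \<beta> \<kappa>..\<beta> * \<kappa>}" using t by simp
qed

lemma Lf_nonneg: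
  assumes a: "\<alpha> \<ge> 1" and b: "\<beta> \<ge> 1" and c: "c \<ge> 1" and k: "0 \<le> \<kappa>" "\<beta> * \<kappa> \<le> 1"
  shows "0 \<le> Lf \<alpha> \<beta> c \<kappa>"
  unfolding Lf_def
  using M_le[OF a b k] g_nonneg[OF a b c k] by (intro cINF_greatest) auto



lemma core:
  assumes a: "\<alpha> \<ge> 1" and b: "\<beta> \<ge> 1" and c: "c \<ge> 1" and k: "0 < \<kappa>" "\<beta> * \<kappa> \<le> 1"
    and p: "0 \<le> \<iota>" "\<iota> \<le> \<kappa>" "\<kappa> - \<iota> \<le> \<tau>" "\<iota> \<le> 1 - \<tau>" "\<alpha> * \<iota> + \<tau> \<le> \<beta> * \<kappa>"
  shows "Aent \<tau> (\<kappa>-\<iota>) + Aent (1-\<tau>) \<iota> - ln c * \<iota> \<le> Aent 1 \<kappa> - Lf \<alpha> \<beta> c \<kappa>"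
proof -
  define \<psi> where "\<psi> x y = Aent x (\<kappa>-y) + Aent (1-x) y - ln c * y" for x y
  have lc: "ln c \<ge> 0" using c by simp
  have ap: "\<alpha> > 0" using a by simp
  have k0: "0 \<le> \<kappa>" using k by simp
  have "1 * \<kappa> \<le> \<beta> * \<kappa>" using k0 b by (intro mult_right_mono) auto
  then have k1: "\<kappa> \<le> 1" using k(2) by linarith
  have sup_bound: "\<psi> x y \<le> Aent 1 \<kappa> - ln c * y"
    if "0 \<le> y" "y \<le> \<kappa>" "\<kappa> - y \<le> x" "y \<le> 1 - x" for x y
  proof -
    have "Aent x (\<kappa>-y) + Aent (1-x) y \<le> Aent (x + (1-x)) ((\<kappa>-y) + y)"
      using that by (intro Aent_superadd) auto
    then show ?thesis unfolding \<psi>_def by simp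
  qed
  define h where "h = \<alpha> * \<iota> + \<tau>"
  have h1: "h \<le> 1" using p k unfolding h_def by simp
  define t where "t = (if h < 1 then (\<beta> * \<kappa> - h) / (1 - h) else 0)"
  have t01: "0 \<le> t" "t \<le> 1" using h1 p k unfolding t_def h_def by (auto simp: field_simps)
  define \<tau>r where "\<tau>r = (1-t) * \<tau> + t * 1"
  define \<iota>r where "\<iota>r = (1-t) * \<iota> + t * 0"
  have line: "\<alpha> * \<iota>r + \<tau>r = \<beta> * \<kappa>"
  proof (cases "h < 1")
    case True
    have "\<alpha> * \<iota>r + \<tau>r = h + t * (1 - h)" unfolding \<iota>r_def \<tau>r_def h_def by (simp add: algebra_simps)
    also have "\<dots> = \<beta> * \<kappa>" using True unfolding t_def by simp
    finally show ?thesis .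
  next
    case False then have "h = 1" using h1 by simp
    then show ?thesis using p k unfolding \<iota>r_def \<tau>r_def t_def h_def by simp
  qed
  have t1: "0 \<le> 1 - t" using t01 by simp
  have rdom: "0 \<le> \<iota>r" "\<iota>r \<le> \<kappa>" "\<kappa> - \<iota>r \<le> \<tau>r" "\<iota>r \<le> 1 - \<tau>r"
  proof -
    show "0 \<le> \<iota>r" unfolding \<iota>r_def using t1 p by simp
    have "(1-t) * \<iota> \<le> 1 * \<kappa>" using t01 p k0 by (intro mult_mono) auto
    then show "\<iota>r \<le> \<kappa>" unfolding \<iota>r_def by simp
    have "(1-t) * (\<kappa> - \<iota>) \<le> (1-t) * \<tau>" using t1 p by (intro mult_left_mono) auto
    moreover have "t * \<kappa> \<le> t * 1" using t01 k1 by (intro mult_left_mono) auto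
    ultimately show "\<kappa> - \<iota>r \<le> \<tau>r" unfolding \<iota>r_def \<tau>r_def by (simp add: algebra_simps)
    have "(1-t) * \<iota> \<le> (1-t) * (1 - \<tau>)" using t1 p by (intro mult_left_mono) auto
    then show "\<iota>r \<le> 1 - \<tau>r" unfolding \<iota>r_def \<tau>r_def by (simp add: algebra_simps)
  qed
  have conc: "(1-t) * \<psi> \<tau> \<iota> + t * \<psi> 1 0 \<le> \<psi> \<tau>r \<iota>r"
  proof -
    have c1: "(1-t) * Aent \<tau> (\<kappa>-\<iota>) + t * Aent 1 \<kappa> \<le> Aent ((1-t)*\<tau> + t*1) ((1-t)*(\<kappa>-\<iota>) + t*\<kappa>)"
      using p t01 k k1 by (intro Aent_concave) auto
    have c2: "(1-t) * Aent (1-\<tau>) \<iota> + t * Aent 0 0 \<le> Aent ((1-t)*(1-\<tau>) + t*0) ((1-t)*\<iota> + t*0)"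
      using p t01 by (intro Aent_concave) auto
    have e1: "(1-t)*(\<kappa>-\<iota>) + t*\<kappa> = \<kappa> - \<iota>r" unfolding \<iota>r_def by (simp add: algebra_simps)
    have e2: "(1-t)*(1-\<tau>) + t*0 = 1 - \<tau>r" unfolding \<tau>r_def by (simp add: algebra_simps)
    show ?thesis using c1 c2 unfolding \<psi>_def e1 e2 \<tau>r_def[symmetric] \<iota>r_def[symmetric]
      by (simp add: \<iota>r_def algebra_simps)
  qed
  have q: "\<psi> 1 0 = Aent 1 \<kappa>" unfolding \<psi>_def by simp
  have pb: "\<psi> \<tau> \<iota> \<le> Aent 1 \<kappa>" using sup_bound[of \<iota> \<tau>] p lc by (smt (verit) mult_nonneg_nonneg)
  have "\<psi> \<tau> \<iota> = (1-t) * \<psi> \<tau> \<iota> + t * \<psi> \<tau> \<iota>" by (simp add: algebra_simps)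
  also have "\<dots> \<le> (1-t) * \<psi> \<tau> \<iota> + t * \<psi> 1 0" using pb q t01 by (simp add: mult_left_mono)
  also have "\<dots> \<le> \<psi> \<tau>r \<iota>r" by (rule conc)
  finally have pr: "\<psi> \<tau> \<iota> \<le> \<psi> \<tau>r \<iota>r" .
  have ir: "\<iota>r = (\<beta>*\<kappa> - \<tau>r)/\<alpha>" using line ap by (simp add: field_simps)
  have tr_le: "\<tau>r \<le> \<beta> * \<kappa>" using line rdom ap by (smt (verit) mult_nonneg_nonneg)
  show ?thesis
  proof (cases "M_ab \<alpha> \<beta> \<kappa> \<le> \<tau>r")
    case True
    have "g_abc \<alpha> \<beta> c \<kappa> \<tau>r = Aent 1 \<kappa> - \<psi> \<tau>r \<iota>r"
      unfolding \<psi>_def using rdom ir a by (intro g_line) auto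
    moreover have "Lf \<alpha> \<beta> c \<kappa> \<le> g_abc \<alpha> \<beta> c \<kappa> \<tau>r" using True tr_le a b c k by (intro Lf_lower) auto
    ultimately show ?thesis using pr unfolding \<psi>_def by simp
  next
    case False
    have ab: "\<alpha> < \<beta>"
    proof (rule ccontr)
      assume "\<not> \<alpha> < \<beta>"
      then consider "\<alpha> = \<beta>" | "\<alpha> > \<beta>" by linarith
      then show False
      proof cases
        case 1 then show False using False rdom k unfolding M_ab_def by (smt (verit) ir)
      next
        case 2
        have "\<alpha> * (\<kappa> - \<iota>r) \<le> \<alpha> * \<tau>r" using rdom ap by (intro mult_left_mono) auto
        then have "(\<alpha> - \<beta>) * \<kappa> \<le> (\<alpha> - 1) * \<tau>r" using line by (simp add: algebra_simps)
        then have "(\<alpha> - \<beta>) / (\<alpha> - 1) * \<kappa> \<le> \<tau>r" using 2 b by (simp add: field_simps)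
        then show False using False 2 unfolding M_ab_def by simp
      qed
    qed
    define M where "M = M_ab \<alpha> \<beta> \<kappa>"
    have ak1: "\<alpha> * \<kappa> < 1" using ab k by (metis mult_strict_right_mono order_less_le_trans)
    have Mdef: "M = (\<beta> - \<alpha>) * \<kappa> / (1 - \<alpha> * \<kappa>)" using ab unfolding M_def M_ab_def by simp
    define \<iota>M where "\<iota>M = (\<beta>*\<kappa> - M)/\<alpha>"
    have iM1: "\<iota>M = (1 - M) * \<kappa>"
      using ak1 ap unfolding \<iota>M_def Mdef by (simp add: field_simps)
    have iM2: "\<kappa> - \<iota>M = M * \<kappa>" using iM1 by (simp add: algebra_simps)
    have Mle: "M \<le> \<beta> * \<kappa>" unfolding M_def using M_le a b k by simp
    have Mge: "M_ab \<alpha> \<beta> \<kappa> \<le> M" unfolding M_def by simp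
    note domM = line_dom[OF a b k0 k(2) Mge Mle \<iota>M_def]
    have "\<psi> M \<iota>M = Aent 1 \<kappa> - ln c * \<iota>M"
    proof -
      have "Aent M (M * \<kappa>) = M * Aent 1 \<kappa>" using Aent_hom[of M \<kappa> 1] domM k by simp
      moreover have "Aent (1-M) ((1-M) * \<kappa>) = (1-M) * Aent 1 \<kappa>" using Aent_hom[of "1-M" \<kappa> 1] domM k Mle by simp
      ultimately show ?thesis unfolding \<psi>_def iM2 by (simp add: iM1 algebra_simps)
    qed
    moreover have "g_abc \<alpha> \<beta> c \<kappa> M = Aent 1 \<kappa> - \<psi> M \<iota>M"
      unfolding \<psi>_def using domM \<iota>M_def a by (intro g_line) auto
    moreover have "Lf \<alpha> \<beta> c \<kappa> \<le> g_abc \<alpha> \<beta> c \<kappa> M" using Mge Mle a b c k by (intro Lf_lower) auto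
    moreover have "\<iota>M \<le> \<iota>r" using False ap unfolding ir \<iota>M_def M_def by (simp add: divide_right_mono)
    moreover have "\<psi> \<tau>r \<iota>r \<le> Aent 1 \<kappa> - ln c * \<iota>r" using sup_bound rdom by simp
    ultimately have "\<psi> \<tau>r \<iota>r \<le> Aent 1 \<kappa> - Lf \<alpha> \<beta> c \<kappa>"
      using lc by (smt (verit) mult_left_mono)
    then show ?thesis using pr unfolding \<psi>_def by simp
  qed
qed



lemma step1:
  fixes s j k n B :: nat and \<alpha> \<beta> d1 :: real
  assumes a: "\<alpha> \<ge> 1" and b: "\<beta> \<ge> 1"
    and sj: "j \<le> k" "k \<le> j + s" "j + s \<le> n"
    and hB: "\<alpha> * real j + real s < real B" and B: "real B \<le> \<beta> * real k + 1"
  defines "d1 \<equiv> 1 + (if \<alpha> > 1 then 1/(\<alpha>-1) else 0)"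
  shows "\<exists>s1 j1::real. 0 \<le> j1 \<and> j1 \<le> real k \<and> real k - j1 \<le> s1 \<and> j1 \<le> real n - s1 \<and> \<alpha> * j1 + s1 \<le> \<beta> * real k
     \<and> real s \<le> s1 \<and> s1 \<le> real s + d1 \<and> real j - d1 \<le> j1 \<and> j1 \<le> real j"
proof -
  have d1: "d1 \<ge> 1" unfolding d1_def by auto
  have bk: "real k \<le> \<beta> * k" using b by (simp add: mult_right_mono[of 1 \<beta> "real k", simplified])
  show ?thesis
  proof (cases "\<alpha> * j + s \<le> \<beta> * k")
    case True
    then show ?thesis using sj d1 by (intro exI[of _ "real s"] exI[of _ "real j"]) auto
  next
    case E: False
    have j1: "j \<ge> 1"
    proof (rule ccontr)
      assume "\<not> j \<ge> 1" then have "j = 0" by simp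
      then have "s < B" using hB by simp
      then have "real s + 1 \<le> real B" by linarith
      then show False using E B \<open>j = 0\<close> by simp
    qed
    show ?thesis
    proof (cases "k < j + s")
      case True
      have "\<alpha> * real (j - 1) + s = \<alpha> * j + s - \<alpha>" using j1 by (simp add: of_nat_diff algebra_simps)
      then have "\<alpha> * real (j - 1) + s \<le> \<beta> * k" using hB B a by linarith
      then show ?thesis using True sj j1 d1
        by (intro exI[of _ "real s"] exI[of _ "real j - 1"]) (auto simp: of_nat_diff)
    next
      case False
      then have ks: "k = j + s" using sj by simp
      have a1: "\<alpha> > 1"
      proof (rule ccontr)
        assume "\<not> \<alpha> > 1" then have "\<alpha> = 1" using a by simp
        then show False using E ks bk by simp
      qed
      define t where "t = min (real j) (1/(\<alpha>-1))"
      have t0: "0 \<le> t" "t \<le> real j" "t \<le> 1/(\<alpha>-1)" using a1 unfolding t_def by auto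
      have td: "t \<le> d1" using t0 a1 unfolding d1_def by simp
      have feas: "\<alpha> * (real j - t) + (real s + t) \<le> \<beta> * k"
      proof (cases "t = real j")
        case True then show ?thesis using ks bk by simp
      next
        case False
        then have "t = 1/(\<alpha>-1)" unfolding t_def by (simp add: min_def split: if_splits)
        then have "(\<alpha> - 1) * t = 1" using a1 by simp
        then have "\<alpha> * (real j - t) + (real s + t) = \<alpha> * j + s - 1" by (simp add: algebra_simps)
        then show ?thesis using hB B by linarith
      qed
      show ?thesis using t0 td feas ks sj d1
        by (intro exI[of _ "real s + t"] exI[of _ "real j - t"]) auto
    qed
  qed
qed

lemma term_bound:
  fixes s j k n B :: nat and \<alpha> \<beta> c \<kappa> d :: real
  assumes a: "\<alpha> \<ge> 1" and b: "\<beta> \<ge> 1" and c: "c \<ge> 1" and k: "0 < \<kappa>" "\<beta> * \<kappa> \<le> 1"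
    and n: "n \<ge> 1" and x: "real k < \<kappa> * real n" "\<kappa> * real n \<le> real k + 1"
    and sj: "j \<le> k" "k \<le> j + s" "j + s \<le> n"
    and hB: "\<alpha> * real j + real s < real B" and B: "real B \<le> \<beta> * real k + 1"
  defines "d \<equiv> 2 * (1 + (if \<alpha> > 1 then 1/(\<alpha>-1) else 0)) + 2"
  shows "Aent (real s) (real (k - j)) + Aent (real (n - s)) (real j) - ln c * real j
     \<le> real n * (Aent 1 \<kappa> - Lf \<alpha> \<beta> c \<kappa>) + 6 * (d * (ln (real n) + 1) + 1)"
proof -
  define d1 :: real where "d1 = 1 + (if \<alpha> > 1 then 1/(\<alpha>-1) else 0)"
  have dd: "d = 2 * d1 + 2" unfolding d_def d1_def by simp
  obtain s1 j1 :: real where S: "0 \<le> j1" "j1 \<le> real k" "real k - j1 \<le> s1" "j1 \<le> real n - s1" "\<alpha> * j1 + s1 \<le> \<beta> * real k"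
     "real s \<le> s1" "s1 \<le> real s + d1" "real j - d1 \<le> j1" "j1 \<le> real j"
    using step1[OF a b sj hB B] unfolding d1_def by blast
  define x where "x = \<kappa> * real n"
  define f where "f = x - real k"
  have f: "0 < f" "f \<le> 1" using x unfolding f_def x_def by auto
  define \<sigma> where "\<sigma> = min (s1 + f) (real n - j1)"
  define y where "y = j1"
  have np: "real n > 0" using n by simp
  have \<sigma>1: "s1 \<le> \<sigma>" "\<sigma> \<le> s1 + f" "\<sigma> \<le> n - j1" using S f unfolding \<sigma>_def by auto
  have D: "0 \<le> y" "y \<le> x" "x - y \<le> \<sigma>" "y \<le> n - \<sigma>" "\<alpha> * y + \<sigma> \<le> \<beta> * x"
  proof -
    show "0 \<le> y" using S y_def by simp
    show "y \<le> x" using S x unfolding y_def x_def by simp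
    have "x \<le> n"
    proof -
      have "1 * \<kappa> \<le> \<beta> * \<kappa>" using k b by (intro mult_right_mono) auto
      then have "\<kappa> \<le> 1" using k(2) by linarith
      then show ?thesis unfolding x_def using np k by (simp add: mult_left_le_one_le)
    qed
    then show "x - y \<le> \<sigma>" using S unfolding \<sigma>_def y_def f_def by auto
    show "y \<le> n - \<sigma>" using \<sigma>1 y_def by simp
    have "f \<le> \<beta> * f" using f b by (simp add: mult_right_mono[of 1 \<beta> f, simplified])
    then show "\<alpha> * y + \<sigma> \<le> \<beta> * x" using S \<sigma>1 unfolding y_def f_def by (simp add: algebra_simps)
  qed
  define \<tau> where "\<tau> = \<sigma> / n"
  define \<iota> where "\<iota> = y / n"
  have sc: "\<sigma> = n * \<tau>" "y = n * \<iota>" "x = n * \<kappa>" unfolding \<tau>_def \<iota>_def x_def using np by auto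
  have cd: "0 \<le> \<iota>" "\<iota> \<le> \<kappa>" "\<kappa> - \<iota> \<le> \<tau>" "\<iota> \<le> 1 - \<tau>" "\<alpha> * \<iota> + \<tau> \<le> \<beta> * \<kappa>"
  proof -
    show "0 \<le> \<iota>" using D np unfolding \<iota>_def by simp
    have "n * \<iota> \<le> n * \<kappa>" using D sc by simp
    then show "\<iota> \<le> \<kappa>" using np by (simp add: mult_le_cancel_left_pos)
    have "n * (\<kappa> - \<iota>) \<le> n * \<tau>" using D sc by (simp add: algebra_simps)
    then show "\<kappa> - \<iota> \<le> \<tau>" using np by (simp add: mult_le_cancel_left_pos)
    have "n * \<iota> \<le> n * (1 - \<tau>)" using D sc by (simp add: algebra_simps)
    then show "\<iota> \<le> 1 - \<tau>" using np by (simp add: mult_le_cancel_left_pos)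
    have "n * (\<alpha> * \<iota> + \<tau>) \<le> n * (\<beta> * \<kappa>)" using D sc by (simp add: algebra_simps)
    then show "\<alpha> * \<iota> + \<tau> \<le> \<beta> * \<kappa>" using np by (simp add: mult_le_cancel_left_pos)
  qed
  have cr: "Aent \<tau> (\<kappa>-\<iota>) + Aent (1-\<tau>) \<iota> - ln c * \<iota> \<le> Aent 1 \<kappa> - Lf \<alpha> \<beta> c \<kappa>"
    by (rule core[OF a b c k cd])
  have "Aent \<sigma> (x - y) + Aent (n - \<sigma>) y - ln c * y
      = n * (Aent \<tau> (\<kappa>-\<iota>) + Aent (1-\<tau>) \<iota> - ln c * \<iota>)"
  proof -
    have e1: "Aent \<sigma> (x - y) = n * Aent \<tau> (\<kappa>-\<iota>)"
      using Aent_hom[of "real n" "\<kappa> - \<iota>" \<tau>] cd np unfolding sc by (simp add: algebra_simps)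
    have e2: "Aent (n - \<sigma>) y = n * Aent (1 - \<tau>) \<iota>"
      using Aent_hom[of "real n" \<iota> "1 - \<tau>"] cd np unfolding sc by (simp add: algebra_simps)
    show ?thesis unfolding e1 e2 using sc by (simp add: algebra_simps)
  qed
  also have "\<dots> \<le> n * (Aent 1 \<kappa> - Lf \<alpha> \<beta> c \<kappa>)" using cr np by (simp add: mult_left_mono)
  finally have main: "Aent \<sigma> (x - y) + Aent (n - \<sigma>) y - ln c * y \<le> n * (Aent 1 \<kappa> - Lf \<alpha> \<beta> c \<kappa>)" .
  have N: "real n \<ge> 1" using n by simp
  have ks: "real (k - j) = real k - real j" using sj by (simp add: of_nat_diff)
  have ns: "real (n - s) = real n - real s" using sj by (simp add: of_nat_diff)
  have m1: "Aent (real s) (real (k - j)) - Aent \<sigma> (x - y) \<le> 3 * (d * (ln n + 1) + 1)"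
    using S \<sigma>1 D f sj unfolding ks dd y_def f_def by (intro Aent_mod[OF N]) (auto simp: abs_le_iff)
  have m2: "Aent (real (n - s)) (real j) - Aent (n - \<sigma>) y \<le> 3 * (d * (ln n + 1) + 1)"
    using S \<sigma>1 D f sj unfolding ns dd y_def f_def by (intro Aent_mod[OF N]) (auto simp: abs_le_iff)
  have m3: "- ln c * j \<le> - ln c * y" using S c unfolding y_def by (simp add: mult_left_mono)
  show ?thesis using main m1 m2 m3 by linarith
qed



definition Dflt :: "nat set \<Rightarrow> nat \<Rightarrow> nat set \<Rightarrow> nat set" where
  "Dflt U B S = (SOME D. D \<subseteq> U - S \<and> card D = B - card S)"
definition badp :: "real \<Rightarrow> nat \<Rightarrow> nat set \<Rightarrow> nat \<Rightarrow> nat set \<Rightarrow> bool" where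
  "badp \<alpha> B S l T \<longleftrightarrow> card (T - S) \<le> l \<and> \<alpha> * real (card (T - S)) < real B - real (card S)"
definition orcT :: "nat set \<Rightarrow> nat \<Rightarrow> real \<Rightarrow> nat set \<Rightarrow> nat set \<Rightarrow> nat \<Rightarrow> nat set" where
  "orcT U B \<alpha> T S l = (if S \<subseteq> U \<and> badp \<alpha> B S l T then T - S else Dflt U B S)"
definition FT :: "nat set \<Rightarrow> nat \<Rightarrow> nat set \<Rightarrow> nat set set" where
  "FT U B T = {S. S \<subseteq> U \<and> (T \<subseteq> S \<or> B \<le> card S)}"

lemma Dflt_prop: assumes "finite U" "S \<subseteq> U" "B \<le> card U"
  shows "Dflt U B S \<subseteq> U - S" "card (Dflt U B S) = B - card S"
proof -
  have "card (U - S) = card U - card S" using assms by (simp add: card_Diff_subset finite_subset)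
  then have "B - card S \<le> card (U - S)" using assms by simp
  then obtain D where "D \<subseteq> U - S" "card D = B - card S" by (metis obtain_subset_with_card_n)
  then have "\<exists>D. D \<subseteq> U - S \<and> card D = B - card S" by blast
  from someI_ex[OF this] show "Dflt U B S \<subseteq> U - S" "card (Dflt U B S) = B - card S"
    unfolding Dflt_def by auto
qed

lemma wt_one: "wt (\<lambda>_. 1) S = real (card S)"
  unfolding wt_def by simp

lemma run_time_nonneg: assumes "c \<ge> 1" shows "run_time c t orc \<ge> 0"
proof (induction t)
  case (Output x) then show ?case by simp
next
  case (Query S l k)
  have "c ^ l \<ge> 0" using assms by simp
  moreover have "run_time c (k (orc S l)) orc \<ge> 0" by (rule Query.IH) simp
  ultimately show ?case by simp
qed

lemma instance_valid:
  fixes \<alpha> :: real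
  assumes U: "finite U" and T: "T \<subseteq> U" "card T = k" and B: "B \<le> card U" "k < B" and a: "\<alpha> \<ge> 1"
  shows "monotone_sys U (FT U B T)"
    and "ext_oracle \<alpha> U (\<lambda>_. 1) (FT U B T) (orcT U B \<alpha> T)"
    and "opt U (\<lambda>_. 1) (FT U B T) = real k"
proof -
  show "monotone_sys U (FT U B T)"
    unfolding monotone_sys_def FT_def
  proof (intro conjI allI impI)
    fix A C assume h: "A \<subseteq> C \<and> C \<subseteq> U \<and> A \<in> {S. S \<subseteq> U \<and> (T \<subseteq> S \<or> B \<le> card S)}"
    then have "card A \<le> card C" using U by (intro card_mono) (auto intro: finite_subset)
    then show "C \<in> {S. S \<subseteq> U \<and> (T \<subseteq> S \<or> B \<le> card S)}" using h by auto
  qed (use T in auto)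
  show "ext_oracle \<alpha> U (\<lambda>_. 1) (FT U B T) (orcT U B \<alpha> T)"
    unfolding ext_oracle_def
  proof (intro allI impI conjI)
    fix S l assume S: "S \<subseteq> U"
    note DP = Dflt_prop[OF U S B(1)]
    have fS: "finite S" using S U finite_subset by blast
    show "orcT U B \<alpha> T S l \<subseteq> U" unfolding orcT_def using DP T by auto
    show "orcT U B \<alpha> T S l \<union> S \<in> FT U B T"
    proof (cases "badp \<alpha> B S l T")
      case True then show ?thesis unfolding orcT_def FT_def using S T by auto
    next
      case False
      have "card (Dflt U B S \<union> S) = card (Dflt U B S) + card S"
        using DP fS U by (intro card_Un_disjoint) (auto intro: finite_subset)
      then have "B \<le> card (Dflt U B S \<union> S)" using DP by simp
      then show ?thesis unfolding orcT_def FT_def using False S DP by auto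
    qed
    {
      fix X assume X: "X \<subseteq> U \<and> card X \<le> l \<and> X \<union> S \<in> FT U B T"
      have fX: "finite X" using X U finite_subset by blast
      have cXS: "card (X \<union> S) \<le> card X + card S" by (rule card_Un_le)
      have aX: "real (card X) \<le> \<alpha> * real (card X)" using a by (simp add: mult_le_cancel_right1)
      have cases: "T - S \<subseteq> X \<or> B \<le> card X + card S" using X cXS unfolding FT_def by auto
      show "wt (\<lambda>_. 1) (orcT U B \<alpha> T S l) \<le> \<alpha> * wt (\<lambda>_. 1) X"
      proof (cases "badp \<alpha> B S l T")
        case True
        then have o: "orcT U B \<alpha> T S l = T - S" unfolding orcT_def using S by simp
        from cases show ?thesis
        proof
          assume "T - S \<subseteq> X"
          then have "card (T - S) \<le> card X" using fX by (rule card_mono[rotated])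
          then show ?thesis unfolding o wt_one using aX by linarith
        next
          assume h: "B \<le> card X + card S"
          have "real (card (T - S)) \<le> \<alpha> * real (card (T - S))" using a by (simp add: mult_le_cancel_right1)
          also have "\<dots> < real B - real (card S)" using True unfolding badp_def by simp
          also have "\<dots> \<le> real (card X)" using h by simp
          finally show ?thesis unfolding o wt_one using aX by linarith
        qed
      next
        case False
        then have o: "orcT U B \<alpha> T S l = Dflt U B S" unfolding orcT_def by simp
        from cases show ?thesis
        proof
          assume "T - S \<subseteq> X"
          then have j: "card (T - S) \<le> card X" using fX by (rule card_mono[rotated])
          then have "card (T - S) \<le> l" using X by simp
          then have "\<alpha> * real (card (T - S)) \<ge> real B - real (card S)" using False unfolding badp_def by simp
          moreover have "\<alpha> * real (card (T - S)) \<le> \<alpha> * real (card X)" using j a by simp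
          moreover have "real (B - card S) \<le> max 0 (real B - real (card S))" by (simp add: of_nat_diff)
          moreover have "0 \<le> \<alpha> * real (card X)" using a by simp
          ultimately show ?thesis unfolding o wt_one DP by linarith
        next
          assume h: "B \<le> card X + card S"
          then have "B - card S \<le> card X" by simp
          then show ?thesis unfolding o wt_one DP using aX by linarith
        qed
      qed
    }
  qed
  show "opt U (\<lambda>_. 1) (FT U B T) = real k"
  proof -
    have fin: "finite (FT U B T)" unfolding FT_def using U by (auto intro: finite_subset[of _ "Pow U"])
    have Tin: "T \<in> FT U B T" unfolding FT_def using T by auto
    have ge: "real k \<le> wt (\<lambda>_. 1) S" if "S \<in> FT U B T" for S
    proof -
      have fS: "finite S" using that U unfolding FT_def by (auto intro: finite_subset)
      from that have "T \<subseteq> S \<or> B \<le> card S" unfolding FT_def by auto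
      then have "k \<le> card S" using T B fS by (auto dest: card_mono)
      then show ?thesis unfolding wt_one by simp
    qed
    have w: "wt (\<lambda>_. 1) T = real k" by (simp only: wt_one T(2))
    show ?thesis unfolding opt_def
    proof (rule Min_eqI)
      show "finite (wt (\<lambda>_. 1) ` FT U B T)" using fin by simp
      show "\<And>y. y \<in> wt (\<lambda>_. 1) ` FT U B T \<Longrightarrow> real k \<le> y" using ge by auto
      show "real k \<in> wt (\<lambda>_. 1) ` FT U B T" using Tin w by (metis image_eqI)
    qed
  qed
qed

lemma adversary:
  fixes t :: alg and \<alpha> c R :: real
  assumes U: "finite U" and c: "c \<ge> 1" and R: "R \<ge> 0"
    and bb: "\<And>S l. S \<subseteq> U \<Longrightarrow> real (card {T. T \<subseteq> U \<and> card T = k \<and> badp \<alpha> B S l T}) \<le> R * (1 + c ^ l)"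
  shows "Cand \<subseteq> {T. T \<subseteq> U \<and> card T = k} \<Longrightarrow> Cand \<noteq> {} \<Longrightarrow>
    (\<forall>T\<in>Cand. T \<subseteq> run_out t (orcT U B \<alpha> T) \<and> finite (run_out t (orcT U B \<alpha> T))
        \<and> card (run_out t (orcT U B \<alpha> T)) \<le> m) \<Longrightarrow>
    (\<exists>T\<in>Cand. real (card Cand) \<le> R * run_time c t (orcT U B \<alpha> T) + real (m choose k))"
proof (induction t arbitrary: Cand)
  case (Output T0)
  then have h: "\<forall>T\<in>Cand. T \<subseteq> T0" "finite T0" "card T0 \<le> m" by auto
  have "Cand \<subseteq> {X. X \<subseteq> T0 \<and> card X = k}" using Output.prems(1) h by auto
  then have "card Cand \<le> card {X. X \<subseteq> T0 \<and> card X = k}"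
    using h by (intro card_mono) auto
  also have "\<dots> = card T0 choose k" using h by (simp add: n_subsets)
  also have "\<dots> \<le> m choose k" using h by (simp add: binomial_right_mono)
  finally have "real (card Cand) \<le> real (m choose k)" by simp
  then show ?case using Output.prems(2) by auto
next
  case (Query S l kk)
  have finC: "finite Cand" using Query.prems(1) U by (auto intro: finite_subset[of _ "Pow U"])
  have rt: "run_time c (Query S l kk) orc = 1 + c ^ l + run_time c (kk (orc S l)) orc" for orc by simp
  have ro: "run_out (Query S l kk) orc = run_out (kk (orc S l)) orc" for orc by simp
  have cl: "c ^ l \<ge> 0" using c by simp
  show ?case
  proof (cases "S \<subseteq> U")
    case False
    then have oe: "orcT U B \<alpha> T S l = Dflt U B S" for T unfolding orcT_def by simp
    obtain T where T: "T \<in> Cand" "real (card Cand) \<le> R * run_time c (kk (Dflt U B S)) (orcT U B \<alpha> T) + real (m choose k)"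
      using Query.IH[of "kk (Dflt U B S)" Cand, OF rangeI] Query.prems unfolding ro oe by auto
    have "R * run_time c (kk (Dflt U B S)) (orcT U B \<alpha> T) \<le> R * run_time c (Query S l kk) (orcT U B \<alpha> T)"
      using R cl unfolding rt oe by (intro mult_left_mono) auto
    then show ?thesis using T by force
  next
    case True
    define C1 where "C1 = {T\<in>Cand. \<not> badp \<alpha> B S l T}"
    define C2 where "C2 = {T\<in>Cand. badp \<alpha> B S l T}"
    have CU: "Cand = C1 \<union> C2" "C1 \<inter> C2 = {}" unfolding C1_def C2_def by auto
    have cC: "card Cand = card C1 + card C2" using finC CU by (simp add: card_Un_disjoint)
    have C2le: "real (card C2) \<le> R * (1 + c ^ l)"
    proof -
      have "C2 \<subseteq> {T. T \<subseteq> U \<and> card T = k \<and> badp \<alpha> B S l T}" using Query.prems(1) unfolding C2_def by auto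
      then have "card C2 \<le> card {T. T \<subseteq> U \<and> card T = k \<and> badp \<alpha> B S l T}"
        using U by (intro card_mono) (auto intro: finite_subset[of _ "Pow U"])
      then show ?thesis using bb[OF True, of l] by linarith
    qed
    show ?thesis
    proof (cases "C1 = {}")
      case True
      obtain T where T: "T \<in> Cand" using Query.prems(2) by auto
      have "R * (1 + c ^ l) \<le> R * run_time c (Query S l kk) (orcT U B \<alpha> T)"
        unfolding rt using R run_time_nonneg[OF c] by (intro mult_left_mono) auto
      then show ?thesis using T cC True C2le by (intro bexI[of _ T]) auto
    next
      case False
      have oe: "orcT U B \<alpha> T S l = Dflt U B S" if "T \<in> C1" for T
        using that unfolding orcT_def C1_def by auto
      have p1: "C1 \<subseteq> {T. T \<subseteq> U \<and> card T = k}" using Query.prems(1) unfolding C1_def by auto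
      have p3: "\<forall>T\<in>C1. T \<subseteq> run_out (kk (Dflt U B S)) (orcT U B \<alpha> T) \<and> finite (run_out (kk (Dflt U B S)) (orcT U B \<alpha> T))
        \<and> card (run_out (kk (Dflt U B S)) (orcT U B \<alpha> T)) \<le> m"
      proof
        fix T assume T: "T \<in> C1"
        then have "T \<in> Cand" unfolding C1_def by simp
        then have "T \<subseteq> run_out (Query S l kk) (orcT U B \<alpha> T) \<and> finite (run_out (Query S l kk) (orcT U B \<alpha> T))
          \<and> card (run_out (Query S l kk) (orcT U B \<alpha> T)) \<le> m" using Query.prems(3) by blast
        then show "T \<subseteq> run_out (kk (Dflt U B S)) (orcT U B \<alpha> T) \<and> finite (run_out (kk (Dflt U B S)) (orcT U B \<alpha> T))
          \<and> card (run_out (kk (Dflt U B S)) (orcT U B \<alpha> T)) \<le> m" using oe[OF T] by simp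
      qed
      obtain T where T: "T \<in> C1" "real (card C1) \<le> R * run_time c (kk (Dflt U B S)) (orcT U B \<alpha> T) + real (m choose k)"
        using Query.IH[of "kk (Dflt U B S)" C1, OF rangeI p1 False p3] by auto
      have "R * run_time c (Query S l kk) (orcT U B \<alpha> T) = R * (1 + c^l) + R * run_time c (kk (Dflt U B S)) (orcT U B \<alpha> T)"
        unfolding rt oe[OF T(1)] by (simp add: algebra_simps)
      then show ?thesis using T cC C2le unfolding C1_def by (intro bexI[of _ T]) auto
    qed
  qed
qed



lemma split_card:
  fixes U S :: "nat set"
  assumes U: "finite U" and S: "S \<subseteq> U"
  shows "card {T. T \<subseteq> U \<and> card T = k \<and> card (T - S) = j} \<le> (card S choose (k - j)) * ((card U - card S) choose j)"
proof -
  define A where "A = {T. T \<subseteq> U \<and> card T = k \<and> card (T - S) = j}"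
  define f where "f T = (T \<inter> S, T - S)" for T :: "nat set"
  define P where "P = {X. X \<subseteq> S \<and> card X = k - j} \<times> {Y. Y \<subseteq> U - S \<and> card Y = j}"
  have fS: "finite S" using U S finite_subset by blast
  have inj: "inj_on f A"
  proof (rule inj_onI)
    fix T1 T2 assume "f T1 = f T2"
    then have "T1 \<inter> S = T2 \<inter> S" "T1 - S = T2 - S" unfolding f_def by auto
    then show "T1 = T2" by blast
  qed
  have img: "f ` A \<subseteq> P"
  proof
    fix z assume "z \<in> f ` A"
    then obtain T where T: "T \<in> A" "z = f T" by auto
    have fT: "finite T" using T U unfolding A_def by (auto intro: finite_subset)
    have "card T = card (T \<inter> S) + card (T - S)"
      using fT by (metis Int_Diff_Un Int_Diff_disjoint card_Un_disjoint finite_Diff finite_Int)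
    moreover have "card T = k" "card (T - S) = j" using T unfolding A_def by auto
    ultimately have "card (T \<inter> S) = k - j" by linarith
    then show "z \<in> P" using T unfolding A_def P_def f_def by auto
  qed
  have finP: "finite P" unfolding P_def using fS U by auto
  have "card A \<le> card P" using card_inj_on_le[OF inj img finP] .
  also have "card P = (card S choose (k - j)) * (card (U - S) choose j)"
    unfolding P_def using fS U by (simp add: card_cartesian_product n_subsets)
  also have "card (U - S) = card U - card S" using S fS by (simp add: card_Diff_subset)
  finally show ?thesis unfolding A_def .
qed

lemma bad_count:
  fixes \<alpha> c E :: real and U S :: "nat set"
  assumes U: "finite U" and S: "S \<subseteq> U" and c: "c \<ge> 1" and E: "E \<ge> 0"
    and tb: "\<And>j. j \<le> k \<Longrightarrow> k \<le> j + card S \<Longrightarrow> j + card S \<le> card U \<Longrightarrow>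
          \<alpha> * real j + real (card S) < real B \<Longrightarrow>
          real (card S choose (k - j)) * real ((card U - card S) choose j) \<le> c ^ j * E"
  shows "real (card {T. T \<subseteq> U \<and> card T = k \<and> badp \<alpha> B S l T}) \<le> (real k + 1) * E * c ^ l"
proof -
  define J where "J = {j. j \<le> k \<and> j \<le> l \<and> \<alpha> * real j + real (card S) < real B}"
  define Aj where "Aj j = {T. T \<subseteq> U \<and> card T = k \<and> card (T - S) = j}" for j
  have finJ: "finite J" unfolding J_def by auto
  have cJ: "card J \<le> k + 1"
  proof -
    have "J \<subseteq> {..k}" unfolding J_def by auto
    then have "card J \<le> card {..k}" by (intro card_mono) auto
    then show ?thesis by simp
  qed
  have sub: "{T. T \<subseteq> U \<and> card T = k \<and> badp \<alpha> B S l T} \<subseteq> (\<Union>j\<in>J. Aj j)"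
  proof
    fix T assume T: "T \<in> {T. T \<subseteq> U \<and> card T = k \<and> badp \<alpha> B S l T}"
    have fT: "finite T" using T U by (auto intro: finite_subset)
    have "card (T - S) \<le> card T" using fT by (intro card_mono) auto
    then have "card (T - S) \<in> J" using T unfolding J_def badp_def by auto
    then show "T \<in> (\<Union>j\<in>J. Aj j)" using T unfolding Aj_def by auto
  qed
  have finA: "finite (Aj j)" for j unfolding Aj_def using U by (auto intro: finite_subset[of _ "Pow U"])
  have each: "real (card (Aj j)) \<le> E * c ^ l" if "j \<in> J" for j
  proof -
    have j: "j \<le> k" "j \<le> l" "\<alpha> * real j + real (card S) < real B" using that unfolding J_def by auto
    have sc: "card S \<le> card U" using S U by (intro card_mono) auto
    have "real (card (Aj j)) \<le> real ((card S choose (k - j)) * ((card U - card S) choose j))"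
      unfolding Aj_def using split_card[OF U S, of k j] by (simp only: of_nat_le_iff)
    also have "\<dots> \<le> c ^ j * E"
    proof (cases "k \<le> j + card S \<and> j + card S \<le> card U")
      case True then show ?thesis using tb[OF j(1)] j by simp
    next
      case False
      then have "card S < k - j \<or> card U - card S < j" using j sc by auto
      then have z: "(card S choose (k - j)) * ((card U - card S) choose j) = 0" by auto
      have "0 \<le> c ^ j * E" using c E by simp
      then show ?thesis using z by (metis of_nat_0 of_nat_mult)
    qed
    also have "\<dots> \<le> c ^ l * E" using c E j by (intro mult_right_mono power_increasing) auto
    finally show ?thesis by (simp add: mult.commute)
  qed
  have "card {T. T \<subseteq> U \<and> card T = k \<and> badp \<alpha> B S l T} \<le> card (\<Union>j\<in>J. Aj j)"
    using sub finJ finA by (intro card_mono) auto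
  also have "\<dots> \<le> (\<Sum>j\<in>J. card (Aj j))" by (rule card_UN_le[OF finJ])
  finally have "real (card {T. T \<subseteq> U \<and> card T = k \<and> badp \<alpha> B S l T}) \<le> (\<Sum>j\<in>J. real (card (Aj j)))"
    by (metis of_nat_le_iff of_nat_sum)
  also have "\<dots> \<le> (\<Sum>j\<in>J. E * c ^ l)" using each by (intro sum_mono) auto
  also have "\<dots> = real (card J) * (E * c ^ l)" by simp
  also have "\<dots> \<le> (real k + 1) * (E * c ^ l)"
    using cJ E c by (intro mult_right_mono) auto
  finally show ?thesis by (simp add: mult.assoc)
qed

lemma main_adv:
  fixes A :: "nat set \<Rightarrow> (nat \<Rightarrow> nat) \<Rightarrow> alg" and \<alpha> \<beta> c R :: real and n k B :: nat
  assumes a: "\<alpha> \<ge> 1" and b: "\<beta> \<ge> 1" and c: "c \<ge> 1" and apx: "is_approx \<alpha> \<beta> A"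
    and k: "1 \<le> k" "k \<le> n" and B: "B = nat \<lfloor>\<beta> * real k\<rfloor> + 1" "B \<le> n" and R: "R \<ge> 0"
    and bb: "\<And>S l. S \<subseteq> {..<n} \<Longrightarrow> real (card {T. T \<subseteq> {..<n} \<and> card T = k \<and> badp \<alpha> B S l T}) \<le> R * (1 + c ^ l)"
  shows "\<exists>T. T \<subseteq> {..<n} \<and> card T = k \<and>
     real (n choose k) \<le> R * run_time c (A {..<n} (\<lambda>_. 1)) (orcT {..<n} B \<alpha> T) + real ((B - 1) choose k)"
proof -
  define U where "U = {..<n::nat}"
  define Cand where "Cand = {T. T \<subseteq> U \<and> card T = k}"
  have U: "finite U" "card U = n" unfolding U_def by auto
  have kB: "k < B"
  proof -
    have "real k \<le> \<beta> * real k" using b by (simp add: mult_le_cancel_right1)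
    then have "int k \<le> \<lfloor>\<beta> * real k\<rfloor>" by (simp add: le_floor_iff)
    then show ?thesis using B by linarith
  qed
  have cCand: "card Cand = n choose k" unfolding Cand_def using U by (simp add: n_subsets)
  have ne: "Cand \<noteq> {}" using cCand k by (metis binomial_eq_0_iff card.empty not_less)
  have good: "\<forall>T\<in>Cand. T \<subseteq> run_out (A U (\<lambda>_. 1)) (orcT U B \<alpha> T) \<and> finite (run_out (A U (\<lambda>_. 1)) (orcT U B \<alpha> T))
        \<and> card (run_out (A U (\<lambda>_. 1)) (orcT U B \<alpha> T)) \<le> B - 1"
  proof
    fix T assume T: "T \<in> Cand"
    then have T': "T \<subseteq> U" "card T = k" unfolding Cand_def by auto
    note iv = instance_valid[OF U(1) T' _ kB a, unfolded U(2), OF B(2)]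
    define out where "out = run_out (A U (\<lambda>_. 1)) (orcT U B \<alpha> T)"
    have o: "out \<in> FT U B T" "wt (\<lambda>_. 1) out \<le> \<beta> * opt U (\<lambda>_. 1) (FT U B T)"
      using apx iv U unfolding is_approx_def out_def by blast+
    have sub: "out \<subseteq> U" using o unfolding FT_def by auto
    have fo: "finite out" using sub U finite_subset by blast
    have "real (card out) \<le> \<beta> * real k" using o iv(3) unfolding wt_one by simp
    then have "int (card out) \<le> \<lfloor>\<beta> * real k\<rfloor>" by (simp add: le_floor_iff)
    then have co: "card out \<le> B - 1" using B by linarith
    then have "T \<subseteq> out" using o kB unfolding FT_def by auto
    then show "T \<subseteq> run_out (A U (\<lambda>_. 1)) (orcT U B \<alpha> T) \<and> finite (run_out (A U (\<lambda>_. 1)) (orcT U B \<alpha> T))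
        \<and> card (run_out (A U (\<lambda>_. 1)) (orcT U B \<alpha> T)) \<le> B - 1" using fo co unfolding out_def by simp
  qed
  have bb': "\<And>S l. S \<subseteq> U \<Longrightarrow> real (card {T. T \<subseteq> U \<and> card T = k \<and> badp \<alpha> B S l T}) \<le> R * (1 + c ^ l)"
    using bb unfolding U_def .
  obtain T where T: "T \<in> Cand" "real (card Cand) \<le> R * run_time c (A U (\<lambda>_. 1)) (orcT U B \<alpha> T) + real ((B - 1) choose k)"
    using adversary[OF U(1) c R bb', of Cand "A U (\<lambda>_. 1)" "B - 1"] ne good unfolding Cand_def by blast
  have T2: "T \<subseteq> {..<n}" "card T = k" using T(1) unfolding Cand_def U_def by auto
  have T3: "real (n choose k) \<le> R * run_time c (A {..<n} (\<lambda>_. 1)) (orcT {..<n} B \<alpha> T) + real ((B - 1) choose k)"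
    using T(2) unfolding cCand U_def .
  show ?thesis using T2 T3 by blast
qed



lemma amls_eq: "amls \<alpha> c \<beta> = exp (SUP \<kappa>\<in>{0..1/\<beta>}. Lf \<alpha> \<beta> c \<kappa>)"
  unfolding amls_def Lf_def ..

lemma Aent1_le1: assumes "0 \<le> \<kappa>" "\<kappa> \<le> 1" shows "Aent 1 \<kappa> \<le> 1"
  using fx_ge[of \<kappa>] fx_ge[of "1 - \<kappa>"] assms unfolding Aent_def by simp

lemma Lf_le1:
  assumes a: "\<alpha> \<ge> 1" and b: "\<beta> \<ge> 1" and c: "c \<ge> 1" and k: "0 \<le> \<kappa>" "\<beta> * \<kappa> \<le> 1"
  shows "Lf \<alpha> \<beta> c \<kappa> \<le> 1"
proof -
  have Mle: "M_ab \<alpha> \<beta> \<kappa> \<le> \<beta> * \<kappa>" using M_le[OF a b k] .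
  have i: "(0::real) = (\<beta> * \<kappa> - \<beta> * \<kappa>) / \<alpha>" by simp
  note dom = line_dom[OF a b k Mle order_refl i]
  have "1 * \<kappa> \<le> \<beta> * \<kappa>" using k b by (intro mult_right_mono) auto
  then have kk: "\<kappa> \<le> \<beta> * \<kappa>" "\<kappa> \<le> 1" using k by auto
  have "g_abc \<alpha> \<beta> c \<kappa> (\<beta> * \<kappa>) = Aent 1 \<kappa> - (Aent (\<beta> * \<kappa>) (\<kappa> - 0) + Aent (1 - \<beta> * \<kappa>) 0 - ln c * 0)"
    using dom a by (intro g_line) auto
  moreover have "0 \<le> Aent (\<beta> * \<kappa>) \<kappa>" using kk k by (intro Aent_nonneg) auto
  moreover have "Lf \<alpha> \<beta> c \<kappa> \<le> g_abc \<alpha> \<beta> c \<kappa> (\<beta> * \<kappa>)" using Mle a b c k by (intro Lf_lower) auto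
  moreover have "Aent 1 \<kappa> \<le> 1" using kk k by (intro Aent1_le1) auto
  ultimately show ?thesis by simp
qed

lemma Lf_0:
  assumes a: "\<alpha> \<ge> 1" and b: "\<beta> \<ge> 1" and c: "c \<ge> 1"
  shows "Lf \<alpha> \<beta> c 0 \<le> 0"
proof -
  have M0: "M_ab \<alpha> \<beta> 0 = 0" unfolding M_ab_def by simp
  have "Lf \<alpha> \<beta> c 0 \<le> g_abc \<alpha> \<beta> c 0 0" using a b c M0 by (intro Lf_lower) auto
  moreover have "g_abc \<alpha> \<beta> c 0 0 = Aent 1 0 - (Aent 0 (0 - 0) + Aent (1 - 0) 0 - ln c * 0)"
    using a by (intro g_line) auto
  ultimately show ?thesis by simp
qed

lemma exists_kappa:
  assumes a: "\<alpha> \<ge> 1" and b: "\<beta> \<ge> 1" and c: "c \<ge> 1" and bp: "0 < bb" and bl: "bb < amls \<alpha> c \<beta>"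
  shows "\<exists>\<kappa>. 0 < \<kappa> \<and> \<beta> * \<kappa> \<le> 1 \<and> ln bb < Lf \<alpha> \<beta> c \<kappa>"
proof (cases "ln bb < 0")
  case True
  have "0 \<le> Lf \<alpha> \<beta> c (1/\<beta>)" using b by (intro Lf_nonneg[OF a b c]) auto
  then show ?thesis using True b by (intro exI[of _ "1/\<beta>"]) auto
next
  case False
  have "ln bb < ln (amls \<alpha> c \<beta>)" using bp bl by simp
  then have lt: "ln bb < (SUP \<kappa>\<in>{0..1/\<beta>}. Lf \<alpha> \<beta> c \<kappa>)" unfolding amls_eq by simp
  have bdd: "bdd_above (Lf \<alpha> \<beta> c ` {0..1/\<beta>})"
  proof (rule bdd_aboveI[where M = 1])
    fix y assume "y \<in> Lf \<alpha> \<beta> c ` {0..1/\<beta>}"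
    then obtain \<kappa> where "\<kappa> \<in> {0..1/\<beta>}" "y = Lf \<alpha> \<beta> c \<kappa>" by auto
    moreover have "\<beta> * \<kappa> \<le> 1" if "\<kappa> \<le> 1/\<beta>" for \<kappa> using that b by (simp add: field_simps)
    ultimately show "y \<le> 1" using Lf_le1[OF a b c] by auto
  qed
  have ne: "{0..1/\<beta>} \<noteq> {}" using b by simp
  obtain \<kappa> where k: "\<kappa> \<in> {0..1/\<beta>}" "ln bb < Lf \<alpha> \<beta> c \<kappa>"
    using lt less_cSUP_iff[OF ne bdd] by auto
  have "\<kappa> \<noteq> 0" using k False Lf_0[OF a b c] by auto
  moreover have "\<beta> * \<kappa> \<le> 1" using k b by (simp add: field_simps)
  ultimately show ?thesis using k by (intro exI[of _ \<kappa>]) auto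
qed



lemma parity_case:
  fixes A :: "nat set \<Rightarrow> (nat \<Rightarrow> nat) \<Rightarrow> alg" and \<alpha> \<beta> c Cst bb :: real
  assumes a: "\<alpha> \<ge> 1" and b: "\<beta> \<ge> 1" and c: "c \<ge> 1" and apx: "is_approx \<alpha> \<beta> A"
    and tb: "\<And>n B T. N \<le> n \<Longrightarrow> B \<le> n \<Longrightarrow> card T < B \<Longrightarrow> T \<subseteq> {..<n} \<Longrightarrow>
       run_time c (A {..<n} (\<lambda>_. 1)) (orcT {..<n} B \<alpha> T) \<le> Cst * real n ^ dd * bb ^ n"
    and bb: "bb \<le> 0"
  shows False
proof -
  define n0 where "n0 = N + nat \<lceil>\<beta>\<rceil> + 2"
  define n where "n = 2 * n0 + (if Cst \<ge> 0 then 1 else 0)"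
  have sign: "Cst * real n ^ dd * bb ^ n \<le> 0"
  proof (cases "Cst \<ge> 0")
    case True
    then have "n = Suc (2 * n0)" unfolding n_def by simp
    then have "bb ^ n = (bb^2) ^ n0 * bb" by (simp only: power_Suc2 power_mult)
    moreover have "(bb^2) ^ n0 \<ge> 0" by simp
    ultimately have "bb ^ n \<le> 0" using bb by (simp add: mult_nonneg_nonpos)
    moreover have "Cst * real n ^ dd \<ge> 0" using True by simp
    ultimately show ?thesis by (simp add: mult_nonneg_nonpos)
  next
    case False
    then have "n = 2 * n0" unfolding n_def by simp
    then have "bb ^ n = (bb^2) ^ n0" by (simp only: power_mult)
    then have "bb ^ n \<ge> 0" by simp
    moreover have "Cst * real n ^ dd \<le> 0" using False by (simp add: mult_nonpos_nonneg)
    ultimately show ?thesis by (simp add: mult_nonpos_nonneg)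
  qed
  define B where "B = nat \<lfloor>\<beta> * real (1::nat)\<rfloor> + 1"
  have nN: "N \<le> n" "2 \<le> n" unfolding n_def n0_def by auto
  have Bn: "B \<le> n"
  proof -
    have "\<lfloor>\<beta>\<rfloor> \<le> \<lceil>\<beta>\<rceil>" by (rule floor_le_ceiling)
    then have "nat \<lfloor>\<beta>\<rfloor> \<le> nat \<lceil>\<beta>\<rceil>" by (rule nat_mono)
    then show ?thesis unfolding B_def n_def n0_def by simp
  qed
  have R: "real n \<ge> 0" by simp
  have bbd: "real (card {T. T \<subseteq> {..<n} \<and> card T = 1 \<and> badp \<alpha> B S l T}) \<le> real n * (1 + c ^ l)"
    if "S \<subseteq> {..<n}" for S l
  proof -
    have "card {T. T \<subseteq> {..<n} \<and> card T = 1 \<and> badp \<alpha> B S l T} \<le> card {T. T \<subseteq> {..<n} \<and> card T = 1}"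
      by (intro card_mono) (auto intro: finite_subset[of _ "Pow {..<n}"])
    also have "\<dots> = n" by (simp add: n_subsets)
    finally have "real (card {T. T \<subseteq> {..<n} \<and> card T = 1 \<and> badp \<alpha> B S l T}) \<le> real n * 1" by simp
    also have "\<dots> \<le> real n * (1 + c ^ l)" using c by (intro mult_left_mono) auto
    finally show ?thesis .
  qed
  obtain T where T: "T \<subseteq> {..<n}" "card T = 1"
    "real (n choose 1) \<le> real n * run_time c (A {..<n} (\<lambda>_. 1)) (orcT {..<n} B \<alpha> T) + real ((B - 1) choose 1)"
    using main_adv[OF a b c apx order_refl _ B_def Bn R bbd] nN by auto
  have kB: "card T < B"
  proof -
    have "int 1 \<le> \<lfloor>\<beta>\<rfloor>" using b by (simp add: le_floor_iff)
    then show ?thesis using T B_def by simp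
  qed
  have "run_time c (A {..<n} (\<lambda>_. 1)) (orcT {..<n} B \<alpha> T) \<le> 0" using tb[OF nN(1) Bn kB T(1)] sign by linarith
  moreover have "run_time c (A {..<n} (\<lambda>_. 1)) (orcT {..<n} B \<alpha> T) \<ge> 0" using run_time_nonneg[OF c] .
  ultimately have "real n \<le> real (B - 1)" using T(3) by simp
  then show False using Bn nN by linarith
qed



lemma pos_case:
  fixes A :: "nat set \<Rightarrow> (nat \<Rightarrow> nat) \<Rightarrow> alg" and \<alpha> \<beta> c Cst bb :: real
  assumes a: "\<alpha> \<ge> 1" and b: "\<beta> \<ge> 1" and c: "c \<ge> 1" and apx: "is_approx \<alpha> \<beta> A"
    and tb: "\<And>n B T. N \<le> n \<Longrightarrow> B \<le> n \<Longrightarrow> card T < B \<Longrightarrow> T \<subseteq> {..<n} \<Longrightarrow>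
       run_time c (A {..<n} (\<lambda>_. 1)) (orcT {..<n} B \<alpha> T) \<le> Cst * real n ^ dd * bb ^ n"
    and bp: "0 < bb" and bl: "bb < amls \<alpha> c \<beta>"
  shows False
proof -
  obtain \<kappa> where k: "0 < \<kappa>" "\<beta> * \<kappa> \<le> 1" "ln bb < Lf \<alpha> \<beta> c \<kappa>"
    using exists_kappa[OF a b c bp bl] by blast
  define L0 where "L0 = Lf \<alpha> \<beta> c \<kappa>"
  define H0 where "H0 = Aent 1 \<kappa>"
  define \<eta> where "\<eta> = L0 - ln bb"
  have \<eta>: "\<eta> > 0" using k unfolding \<eta>_def L0_def by simp
  define D0 :: real where "D0 = 2 * (1 + (if \<alpha> > 1 then 1/(\<alpha>-1) else 0)) + 2"
  define a0 where "a0 = 6 * D0 + 3"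
  define b0 where "b0 = 6 * D0 + 12"
  define Q where "Q n = (real n + 1) ^ 2 * real n ^ (dd + 1) * exp (a0 * ln (real n) + b0)" for n :: nat
  have lim: "filterlim (\<lambda>n. exp (\<eta> * real n) / Q n) at_top sequentially"
    unfolding Q_def using \<eta> by real_asymp
  have ev1: "eventually (\<lambda>n. max Cst 0 + 1 \<le> exp (\<eta> * real n) / Q n) sequentially"
    using lim by (simp add: filterlim_at_top)
  have ev2: "eventually (\<lambda>n. N \<le> n \<and> 1 \<le> n \<and> nat \<lceil>1/\<kappa>\<rceil> + 1 \<le> n) sequentially"
    by (intro eventually_conj eventually_ge_at_top)
  obtain n where n: "max Cst 0 + 1 \<le> exp (\<eta> * real n) / Q n" "N \<le> n" "1 \<le> n" "nat \<lceil>1/\<kappa>\<rceil> + 1 \<le> n"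
    using eventually_conj[OF ev1 ev2] unfolding eventually_sequentially by auto
  have np: "real n > 0" using n by simp
  have kn1: "\<kappa> * real n > 1"
  proof -
    have "1/\<kappa> \<le> real (nat \<lceil>1/\<kappa>\<rceil>)" by linarith
    then have "1/\<kappa> < real n" using n by linarith
    then show ?thesis using k by (simp add: field_simps)
  qed
  have k1: "\<kappa> \<le> 1"
  proof -
    have "1 * \<kappa> \<le> \<beta> * \<kappa>" using k b by (intro mult_right_mono) auto
    then show ?thesis using k by linarith
  qed
  define x where "x = \<kappa> * real n"
  define kk where "kk = nat \<lceil>x\<rceil> - 1"
  have cx: "of_int \<lceil>x\<rceil> - 1 < x" "x \<le> of_int \<lceil>x\<rceil>" by (auto simp: ceiling_correct)
  have "(1::real) < of_int \<lceil>x\<rceil>" using kn1 cx unfolding x_def by linarith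
  then have "1 < \<lceil>x\<rceil>" by (metis of_int_1 of_int_less_iff)
  then have cx2: "\<lceil>x\<rceil> \<ge> 2" by linarith
  have ik: "int kk = \<lceil>x\<rceil> - 1" unfolding kk_def using cx2 by linarith
  have rk: "real kk = of_int \<lceil>x\<rceil> - 1" by (metis ik of_int_of_nat_eq of_int_diff of_int_1)
  have xk: "real kk < x" "x \<le> real kk + 1" using cx rk by auto
  have kk1: "1 \<le> kk" using cx2 unfolding kk_def by linarith
  have xn: "x \<le> real n" unfolding x_def using k1 np by (simp add: mult_le_cancel_right1)
  have kkn: "kk \<le> n" using xk xn by linarith
  define B where "B = nat \<lfloor>\<beta> * real kk\<rfloor> + 1"
  have bx: "\<beta> * real kk < real n"
  proof -
    have "\<beta> * real kk < \<beta> * x" using xk b by simp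
    also have "\<beta> * x = (\<beta> * \<kappa>) * real n" unfolding x_def by simp
    also have "\<dots> \<le> 1 * real n" using k np by (intro mult_right_mono) auto
    finally show ?thesis by simp
  qed
  have Bn: "B \<le> n"
  proof -
    have "\<lfloor>\<beta> * real kk\<rfloor> < int n" using bx by (simp add: floor_less_iff)
    moreover have "0 \<le> \<lfloor>\<beta> * real kk\<rfloor>" using b by simp
    ultimately have "nat \<lfloor>\<beta> * real kk\<rfloor> < n" using nat_less_iff by blast
    then show ?thesis unfolding B_def by linarith
  qed
  have rB: "real B \<le> \<beta> * real kk + 1"
  proof -
    have "0 \<le> \<beta> * real kk" using b by simp
    then have "real (nat \<lfloor>\<beta> * real kk\<rfloor>) = of_int \<lfloor>\<beta> * real kk\<rfloor>" by simp
    then show ?thesis unfolding B_def by (simp add: of_int_floor_le)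
  qed
  define Kn where "Kn = 6 * (D0 * (ln (real n) + 1) + 1)"
  define E where "E = exp (real n * (H0 - L0) + Kn)"
  define R where "R = (real n + 1) * E"
  have E0: "E \<ge> 0" "R \<ge> 0" unfolding E_def R_def by auto
  have cpos: "c > 0" using c by simp
  have bbd: "real (card {T. T \<subseteq> {..<n} \<and> card T = kk \<and> badp \<alpha> B S l T}) \<le> R * (1 + c ^ l)"
    if S: "S \<subseteq> {..<n}" for S l
  proof -
    have tbj: "real (card S choose (kk - j)) * real ((card {..<n} - card S) choose j) \<le> c ^ j * E"
      if j: "j \<le> kk" "kk \<le> j + card S" "j + card S \<le> card {..<n}" "\<alpha> * real j + real (card S) < real B" for j
    proof -
      define s where "s = card S"
      have j': "j \<le> kk" "kk \<le> j + s" "j + s \<le> n" "\<alpha> * real j + real s < real B" using j unfolding s_def by auto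
      have T: "Aent (real s) (real (kk - j)) + Aent (real (n - s)) (real j) - ln c * real j
         \<le> real n * (Aent 1 \<kappa> - Lf \<alpha> \<beta> c \<kappa>) + 6 * (D0 * (ln (real n) + 1) + 1)"
        using term_bound[OF a b c k(1) k(2) n(3) xk[unfolded x_def] j'(1) j'(2) j'(3) j'(4) rB] unfolding D0_def by simp
      have u1: "real (s choose (kk - j)) \<le> exp (Aent (real s) (real (kk - j)))" using j' by (intro binom_upper) auto
      have u2: "real ((n - s) choose j) \<le> exp (Aent (real (n - s)) (real j))" using j' by (intro binom_upper) auto
      have "real (s choose (kk - j)) * real ((n - s) choose j) \<le> exp (Aent (real s) (real (kk - j))) * exp (Aent (real (n - s)) (real j))"
        using u1 u2 by (intro mult_mono) auto
      also have "\<dots> = exp (Aent (real s) (real (kk - j)) + Aent (real (n - s)) (real j))" by (simp add: exp_add)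
      also have "\<dots> \<le> exp (ln c * real j + (real n * (H0 - L0) + Kn))"
        using T unfolding H0_def L0_def Kn_def by simp
      also have "\<dots> = c ^ j * E" unfolding E_def exp_add using cpos
        by (simp add: pow_exp_ln[OF cpos] mult.commute)
      finally show ?thesis unfolding s_def by simp
    qed
    have "real (card {T. T \<subseteq> {..<n} \<and> card T = kk \<and> badp \<alpha> B S l T}) \<le> (real kk + 1) * E * c ^ l"
      using bad_count[OF _ S c E0(1) tbj] by simp
    also have "\<dots> \<le> (real n + 1) * E * (1 + c ^ l)"
      using kkn E0 c by (intro mult_mono) auto
    finally show ?thesis unfolding R_def by (simp add: mult.assoc)
  qed
  obtain T where T: "T \<subseteq> {..<n}" "card T = kk"
    "real (n choose kk) \<le> R * run_time c (A {..<n} (\<lambda>_. 1)) (orcT {..<n} B \<alpha> T) + real ((B - 1) choose kk)"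
    using main_adv[OF a b c apx kk1 kkn B_def Bn E0(2) bbd] by blast
  have kB: "card T < B"
  proof -
    have "real kk \<le> \<beta> * real kk" using b by (simp add: mult_le_cancel_right1)
    then have "int kk \<le> \<lfloor>\<beta> * real kk\<rfloor>" by (simp add: le_floor_iff)
    then show ?thesis using T B_def by linarith
  qed
  have rt: "run_time c (A {..<n} (\<lambda>_. 1)) (orcT {..<n} B \<alpha> T) \<le> Cst * real n ^ dd * bb ^ n"
    using tb[OF n(2) Bn kB T(1)] .
  have bin1: "real ((B - 1) choose kk) \<le> real ((n - 1) choose kk)"
    using Bn by (simp add: binomial_right_mono)
  have bin2: "real n * real ((n - 1) choose kk) = (real n - real kk) * real (n choose kk)"
  proof -
    have "(n - kk) * (n choose kk) = n * ((n - 1) choose kk)" by (rule binomial_absorb_comp)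
    then have "real ((n - kk) * (n choose kk)) = real (n * ((n - 1) choose kk))" by simp
    then show ?thesis using kkn by (simp add: of_nat_diff)
  qed
  have star: "real (n choose kk) \<le> real n * R * (Cst * real n ^ dd * bb ^ n)"
  proof -
    have "R * run_time c (A {..<n} (\<lambda>_. 1)) (orcT {..<n} B \<alpha> T) \<le> R * (Cst * real n ^ dd * bb ^ n)"
      using rt E0 by (intro mult_left_mono) auto
    then have h: "real (n choose kk) \<le> R * (Cst * real n ^ dd * bb ^ n) + real ((n - 1) choose kk)"
      using T(3) bin1 by linarith
    have "real n * real (n choose kk) \<le> real n * (R * (Cst * real n ^ dd * bb ^ n)) + real n * real ((n - 1) choose kk)"
      using mult_left_mono[OF h, of "real n"] by (simp add: algebra_simps)
    then have "real kk * real (n choose kk) \<le> real n * (R * (Cst * real n ^ dd * bb ^ n))"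
      unfolding bin2 by (simp add: algebra_simps)
    moreover have "real (n choose kk) \<le> real kk * real (n choose kk)" using kk1 by (simp add: mult_le_cancel_right1)
    ultimately show ?thesis by (simp add: mult.assoc)
  qed
  have low: "exp (real n * H0 - 3 * (ln (real n) + 2)) \<le> (real n + 1) * real (n choose kk)"
  proof -
    have hom: "Aent (real n) x = real n * H0"
      using Aent_hom[of "real n" \<kappa> 1] k k1 unfolding H0_def x_def by (simp add: mult.commute)
    have "Aent (real n) x - Aent (real n) (real kk) \<le> 3 * (1 * (ln (real n) + 1) + 1)"
      using xk xn np n(3) by (intro Aent_mod) (auto simp: abs_le_iff)
    then have "real n * H0 - 3 * (ln (real n) + 2) \<le> Aent (real n) (real kk)" using hom by simp
    then have "exp (real n * H0 - 3 * (ln (real n) + 2)) \<le> exp (Aent (real n) (real kk))" by simp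
    also have "\<dots> \<le> real (n + 1) * real (n choose kk)" using binom_lower[OF kkn] .
    finally show ?thesis by (simp add: add.commute)
  qed
  define P where "P = (real n + 1) ^ 2 * real n ^ (dd + 1)"
  have bbn: "bb ^ n = exp (real n * ln bb)" using pow_exp_ln[OF bp, of n] by simp
  have "exp (real n * H0 - 3 * (ln (real n) + 2)) \<le> (real n + 1) * (real n * R * (Cst * real n ^ dd * bb ^ n))"
  proof -
    have "(real n + 1) * real (n choose kk) \<le> (real n + 1) * (real n * R * (Cst * real n ^ dd * bb ^ n))"
      using star by (intro mult_left_mono) auto
    then show ?thesis using low by linarith
  qed
  also have "\<dots> = Cst * P * (E * bb ^ n)" unfolding R_def P_def by (simp add: algebra_simps power2_eq_square)
  also have "E * bb ^ n = exp (real n * H0 - real n * \<eta> + Kn)"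
    unfolding E_def bbn \<eta>_def by (simp add: exp_add[symmetric] algebra_simps)
  finally have ineq: "exp (real n * H0 - 3 * (ln (real n) + 2)) \<le> Cst * P * exp (real n * H0 - real n * \<eta> + Kn)" .
  have "exp (\<eta> * real n) = exp (real n * H0 - 3 * (ln (real n) + 2)) * exp (real n * \<eta> - real n * H0 + 3 * (ln (real n) + 2))"
    by (simp add: exp_add[symmetric] algebra_simps)
  also have "\<dots> \<le> Cst * P * exp (real n * H0 - real n * \<eta> + Kn) * exp (real n * \<eta> - real n * H0 + 3 * (ln (real n) + 2))"
    using ineq by (intro mult_right_mono) auto
  also have "\<dots> = Cst * P * exp (Kn + 3 * (ln (real n) + 2))"
    by (simp add: mult.assoc exp_add[symmetric] algebra_simps)
  also have "Kn + 3 * (ln (real n) + 2) = a0 * ln (real n) + b0" unfolding Kn_def a0_def b0_def by (simp add: algebra_simps)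
  also have "Cst * P * exp (a0 * ln (real n) + b0) = Cst * Q n" unfolding P_def Q_def by simp
  finally have up: "exp (\<eta> * real n) \<le> Cst * Q n" .
  have Qp: "Q n > 0" unfolding Q_def using np by simp
  have "(max Cst 0 + 1) * Q n \<le> exp (\<eta> * real n)" using n(1) Qp by (simp add: le_divide_eq)
  moreover have "Cst * Q n < (max Cst 0 + 1) * Q n" using Qp by (intro mult_strict_right_mono) auto
  ultimately show False using up by linarith
qed


theorem corollary2p7:
  fixes \<alpha> c \<beta> \<epsilon> :: real
  assumes "\<alpha> \<ge> 1" and "c \<ge> 1" and "\<beta> \<ge> 1" and "\<epsilon> > 0"
  shows "\<not> (\<exists>A. is_approx \<alpha> \<beta> A \<and> runs_in_time_poly_exp \<alpha> c A (amls \<alpha> c \<beta> - \<epsilon>))"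
proof
  assume "\<exists>A. is_approx \<alpha> \<beta> A \<and> runs_in_time_poly_exp \<alpha> c A (amls \<alpha> c \<beta> - \<epsilon>)"
  then obtain A where apx: "is_approx \<alpha> \<beta> A" and rt: "runs_in_time_poly_exp \<alpha> c A (amls \<alpha> c \<beta> - \<epsilon>)"
    by blast
  define bb where "bb = amls \<alpha> c \<beta> - \<epsilon>"
  obtain Cst :: real and dd N :: nat where tb0: "\<forall>U w F orc. finite U \<and> monotone_sys U F \<and> ext_oracle \<alpha> U w F orc \<and> card U \<ge> N
      \<longrightarrow> run_time c (A U w) orc \<le> Cst * real (card U) ^ dd * bb ^ card U"
    using rt unfolding runs_in_time_poly_exp_def bb_def by blast
  have tb: "run_time c (A {..<n} (\<lambda>_. 1)) (orcT {..<n} B \<alpha> T) \<le> Cst * real n ^ dd * bb ^ n"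
    if h: "N \<le> n" "B \<le> n" "card T < B" "T \<subseteq> {..<n}" for n B T
  proof -
    have fin: "finite {..<n::nat}" by simp
    note iv = instance_valid[OF fin h(4) refl _ h(3) assms(1), unfolded card_lessThan, OF h(2)]
    have "run_time c (A {..<n} (\<lambda>_. 1)) (orcT {..<n} B \<alpha> T)
        \<le> Cst * real (card {..<n}) ^ dd * bb ^ card {..<n}"
      using iv(1,2) h(1) by (intro tb0[rule_format]) simp
    then show ?thesis by simp
  qed
  show False
  proof (cases "bb \<le> 0")
    case True
    show False by (rule parity_case[OF assms(1) assms(3) assms(2) apx tb True])
  next
    case False
    have "bb < amls \<alpha> c \<beta>" using assms(4) unfolding bb_def by simp
    then show False using pos_case[OF assms(1) assms(3) assms(2) apx tb] False by simp
  qed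
qed

end
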